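(* (1) If $\rho,\sigma\in S_n$ are disjoint (no index is moved by both), then $X^\rho_{\vec1}\otimes X^\sigma_{\vec1}=X^\sigma_{\vec1}\otimes X^\rho_{\vec1}=X^{\rho\sigma}_{\vec1}$. (2) Every bare defect $X^\sigma_{\vec1}$ can be written as a product of bare transposition defects: there are transpositions $\tau_1,\dots,\tau_m$ with $\sigma=\tau_1\cdots\tau_m$ and $X^\sigma_{\vec1}=X^{\tau_1}_{\vec1}\otimes(X^{\tau_2}_{\vec1}\otimes(\cdots\otimes X^{\tau_m}_{\vec1}))$.
   Context: Let $\mathcal{C}$ be a modular tensor category, $\mathrm{Irr}(\mathcal{C})$ its finite set of isomorphism classes of simple objects (containing $1$), $a\mapsto a^*$ duality, $C$ its fusion ring (free $\mathbb{Z}$-module on $\mathrm{Irr}(\mathcal{C})$, product $a\otimes b=\sum_cN_{ab}^cc$). Fix $n\ge2$. $C^{\boxtimes n}=C^{\otimes_{\mathbb{Z}}n}$ has basis the multilayer anyons $\vec a=a_1\boxtimes\cdots\boxtimes a_n$, layerwise product, unit $\vec1$; permutations compose right to left. For $\sigma\in S_n$ with orbits $\mathcal{O}(\sigma)$ (cycles incl. fixed points), $\vec a$ is $\sigma$-fixed iff constant on orbits. $C_\sigma$: free $\mathbb{Z}$-module on symbols $X^\sigma_{\vec a}$ ($\vec a$ $\sigma$-fixed), identified with $R_\sigma=\bigotimes_{O\in\mathcal{O}(\sigma)}C$; $X^\sigma_r$ for $r\in R_\sigma$; $X^\sigma_{\vec1}$ is the bare $\sigma$-defect; $C_{\mathrm{id}}=C^{\boxtimes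 n}$. Confinement $c_\sigma:C^{\boxtimes n}\to R_\sigma$, linear, $c_\sigma(\vec a)=\bigotimes_O(\bigotimes_{k\in O}a_k)$. Anyon–defect fusion $\vec a\otimes X^\sigma_{\vec b}=X^\sigma_{\vec b}\otimes\vec a:=X^\sigma_{c_\sigma(\vec a)\cdot\vec b}$. A $\sigma$-deconfinement $d_\sigma(\vec b)$: any $d\in C^{\boxtimes n}$ with nonnegative coefficients and $d\otimes X^\sigma_{\vec1}=X^\sigma_{\vec b}$. For $t=(ij)$, $\Omega_t=\sum_c\vec e_c$ ($c$ in layer $i$, $c^*$ in layer $j$, $1$ elsewhere). Following the paper's algorithm, $F(\rho,\sigma)$: write $\rho=t_1\cdots t_m$ with each disjoint cycle $(i_1\cdots i_l)$ written as $(i_1i_2)\cdots(i_{l-1}i_l)$; $\pi_{m+1}=\sigma$, $\pi_k=t_k\pi_{k+1}$; $F=\prod\Omega_{t_k}$ over $k$ with both indices of $t_k$ in a common cycle of $\pi_{k+1}$. Defect fusion is bilinear with $X^\rho_{\vec a}\otimes X^\sigma_{\vec b}:=(d_\rho(\vec a)\otimes d_\sigma(\vec b)\otimes F(\rho,\sigma))\otimes X^{\rho\sigma}_{\vec1}$. *)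

theory Defs
  imports "HOL-Combinatorics.Permutations" "HOL-Combinatorics.Transposition"
begin

text \<open>Only the fusion ring of the MTC enters the statement.  Layers are indexed 0..n-1.\<close>

record 'a fusion_ring =
  irr :: "'a set"
  one :: 'a
  dual :: "'a \<Rightarrow> 'a"
  N :: "'a \<Rightarrow> 'a \<Rightarrow> 'a \<Rightarrow> int"

definition fusion_data :: "'a fusion_ring \<Rightarrow> bool" where
  "fusion_data R \<longleftrightarrow>
     finite (irr R) \<and> one R \<in> irr R \<and>
     (\<forall>a\<in>irr R. dual R a \<in> irr R \<and> dual R (dual R a) = a) \<and>
     (\<forall>a b c. 0 \<le> N R a b c) \<and>
     (\<forall>a b c. a \<notin> irr R \<or> b \<notin> irr R \<or> c \<notin> irr R \<longrightarrow> N R a b c = 0) \<and>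
     (\<forall>a\<in>irr R. \<forall>c\<in>irr R. N R (one R) a c = (if a = c then 1 else 0)) \<and>
     (\<forall>a b c. N R a b c = N R b a c) \<and>
     (\<forall>a\<in>irr R. \<forall>b\<in>irr R. \<forall>c\<in>irr R. \<forall>d\<in>irr R.
        (\<Sum>e\<in>irr R. N R a b e * N R e c d) = (\<Sum>e\<in>irr R. N R b c e * N R a e d)) \<and>
     (\<forall>a\<in>irr R. \<forall>b\<in>irr R. N R a b (one R) = (if b = dual R a then 1 else 0)) \<and>
     (\<forall>a\<in>irr R. \<forall>b\<in>irr R. \<forall>c\<in>irr R. N R a b c = N R (dual R a) c b) \<and>
     (\<forall>a\<in>irr R. \<forall>b\<in>irr R. \<forall>c\<in>irr R.
        N R a b c = N R (dual R b) (dual R a) (dual R c))"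

type_synonym 'a celem = "'a \<Rightarrow> int"

definition cmult :: "'a fusion_ring \<Rightarrow> 'a celem \<Rightarrow> 'a celem \<Rightarrow> 'a celem" where
  "cmult R x y = (\<lambda>c. \<Sum>a\<in>irr R. \<Sum>b\<in>irr R. x a * y b * N R a b c)"

definition cunit :: "'a fusion_ring \<Rightarrow> 'a celem" where
  "cunit R = (\<lambda>c. if c = one R then 1 else 0)"

definition cbasis :: "'a \<Rightarrow> 'a celem" where
  "cbasis a = (\<lambda>c. if c = a then 1 else 0)"

definition cprod_list :: "'a fusion_ring \<Rightarrow> 'a list \<Rightarrow> 'a celem" where
  "cprod_list R xs = foldr (cmult R) (map cbasis xs) (cunit R)"

text \<open>A multilayer anyon is a function nat => 'a whose layers 0..n-1 are simples and
which is the unit object elsewhere.  Elements of C^{\<boxtimes>n} (and of R_sigma) are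
integer coefficient functions on multilayer anyons.\<close>

type_synonym 'a mla = "nat \<Rightarrow> 'a"
type_synonym 'a melem = "'a mla \<Rightarrow> int"

definition valid :: "'a fusion_ring \<Rightarrow> nat \<Rightarrow> 'a mla set" where
  "valid R n = {v. (\<forall>i<n. v i \<in> irr R) \<and> (\<forall>i\<ge>n. v i = one R)}"

definition telem :: "'a fusion_ring \<Rightarrow> nat \<Rightarrow> 'a melem \<Rightarrow> bool" where
  "telem R n x \<longleftrightarrow> (\<forall>v. v \<notin> valid R n \<longrightarrow> x v = 0)"

definition tbasis :: "'a mla \<Rightarrow> 'a melem" where
  "tbasis v = (\<lambda>c. if c = v then 1 else 0)"

definition tunit :: "'a fusion_ring \<Rightarrow> 'a melem" where
  "tunit R = tbasis (\<lambda>_. one R)"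

definition tmult :: "'a fusion_ring \<Rightarrow> nat \<Rightarrow> 'a melem \<Rightarrow> 'a melem \<Rightarrow> 'a melem" where
  "tmult R n x y = (\<lambda>c. if c \<in> valid R n then
      (\<Sum>a\<in>valid R n. \<Sum>b\<in>valid R n. x a * y b * (\<Prod>i<n. N R (a i) (b i) (c i)))
    else 0)"

definition orb :: "(nat \<Rightarrow> nat) \<Rightarrow> nat \<Rightarrow> nat set" where
  "orb \<sigma> k = {(\<sigma> ^^ j) k | j. True}"

definition orbits :: "nat \<Rightarrow> (nat \<Rightarrow> nat) \<Rightarrow> nat set set" where
  "orbits n \<sigma> = orb \<sigma> ` {..<n}"

definition fixed_vecs :: "'a fusion_ring \<Rightarrow> nat \<Rightarrow> (nat \<Rightarrow> nat) \<Rightarrow> 'a mla set" where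
  "fixed_vecs R n \<sigma> = {v \<in> valid R n. \<forall>k<n. v (\<sigma> k) = v k}"

text \<open>Product in R_sigma = tensor over orbits of C (orbit O represented by Min O).\<close>
definition rmult :: "'a fusion_ring \<Rightarrow> nat \<Rightarrow> (nat \<Rightarrow> nat) \<Rightarrow> 'a melem \<Rightarrow> 'a melem \<Rightarrow> 'a melem" where
  "rmult R n \<sigma> r s = (\<lambda>c. if c \<in> fixed_vecs R n \<sigma> then
      (\<Sum>a\<in>fixed_vecs R n \<sigma>. \<Sum>b\<in>fixed_vecs R n \<sigma>.
          r a * s b * (\<Prod>Ob\<in>orbits n \<sigma>. N R (a (Min Ob)) (b (Min Ob)) (c (Min Ob))))
    else 0)"

definition runit :: "'a fusion_ring \<Rightarrow> (nat \<Rightarrow> nat) \<Rightarrow> 'a melem" where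
  "runit R \<sigma> = tunit R"

definition conf :: "'a fusion_ring \<Rightarrow> nat \<Rightarrow> (nat \<Rightarrow> nat) \<Rightarrow> 'a melem \<Rightarrow> 'a melem" where
  "conf R n \<sigma> x = (\<lambda>b. if b \<in> fixed_vecs R n \<sigma> then
      (\<Sum>a\<in>valid R n. x a *
          (\<Prod>Ob\<in>orbits n \<sigma>. cprod_list R (map a (sorted_list_of_set Ob)) (b (Min Ob))))
    else 0)"

text \<open>A defect element X^sigma_r is represented by the pair (sigma, r), r in R_sigma.\<close>
type_synonym 'a defect = "(nat \<Rightarrow> nat) \<times> 'a melem"

definition bare :: "'a fusion_ring \<Rightarrow> (nat \<Rightarrow> nat) \<Rightarrow> 'a defect" where
  "bare R \<sigma> = (\<sigma>, runit R \<sigma>)"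

text \<open>Anyon-defect fusion  d \<otimes> X^sigma_r = X^sigma_{c_sigma(d) r}.\<close>
definition act :: "'a fusion_ring \<Rightarrow> nat \<Rightarrow> 'a melem \<Rightarrow> 'a defect \<Rightarrow> 'a defect" where
  "act R n d X = (fst X, rmult R n (fst X) (conf R n (fst X) d) (snd X))"

definition is_deconf :: "'a fusion_ring \<Rightarrow> nat \<Rightarrow> (nat \<Rightarrow> nat) \<Rightarrow> 'a mla \<Rightarrow> 'a melem \<Rightarrow> bool" where
  "is_deconf R n \<sigma> b d \<longleftrightarrow> telem R n d \<and> (\<forall>v. 0 \<le> d v) \<and>
     act R n d (bare R \<sigma>) = (\<sigma>, tbasis b)"

definition omega :: "'a fusion_ring \<Rightarrow> nat \<Rightarrow> nat \<Rightarrow> nat \<Rightarrow> 'a melem" where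
  "omega R n i j = (\<lambda>v. if v \<in> valid R n \<and> v j = dual R (v i) \<and>
      (\<forall>k<n. k \<noteq> i \<and> k \<noteq> j \<longrightarrow> v k = one R) then 1 else 0)"

text \<open>A disjoint cycle decomposition of rho (cycles of length >= 2, any order,
any starting point): each list [i1,...,il] means rho i_j = i_{j+1}, rho i_l = i1.\<close>
definition is_cycle_decomp :: "nat \<Rightarrow> (nat \<Rightarrow> nat) \<Rightarrow> nat list list \<Rightarrow> bool" where
  "is_cycle_decomp n \<rho> cs \<longleftrightarrow>
     distinct cs \<and>
     (\<forall>c\<in>set cs. 2 \<le> length c \<and> distinct c \<and>
        (\<forall>j<length c. \<rho> (c ! j) = c ! ((j + 1) mod length c))) \<and>
     (\<forall>c1\<in>set cs. \<forall>c2\<in>set cs. c1 \<noteq> c2 \<longrightarrow> set c1 \<inter> set c2 = {}) \<and>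
     (\<Union>c\<in>set cs. set c) = {k. k < n \<and> \<rho> k \<noteq> k}"

text \<open>Cycle (i1 ... il) written as (i1 i2)(i2 i3)...(i_{l-1} i_l).\<close>
definition transp_list :: "nat list list \<Rightarrow> (nat \<times> nat) list" where
  "transp_list cs = concat (map (\<lambda>c. map (\<lambda>j. (c ! j, c ! Suc j)) [0..<length c - 1]) cs)"

text \<open>prod_transp [t_k,...,t_m] sigma = t_k ... t_m sigma  (composition right to left).\<close>
definition prod_transp :: "(nat \<times> nat) list \<Rightarrow> (nat \<Rightarrow> nat) \<Rightarrow> (nat \<Rightarrow> nat)" where
  "prod_transp ts \<sigma> = foldr (\<lambda>(a, b) p. transpose a b \<circ> p) ts \<sigma>"

text \<open>F for rho = t_1 ... t_m: product of Omega_{t_k} over k such that both indices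
of t_k lie in a common cycle of pi_{k+1} = t_{k+1} ... t_m sigma.\<close>
fun Fcomp :: "'a fusion_ring \<Rightarrow> nat \<Rightarrow> (nat \<times> nat) list \<Rightarrow> (nat \<Rightarrow> nat) \<Rightarrow> 'a melem" where
  "Fcomp R n [] \<sigma> = tunit R"
| "Fcomp R n ((i, j) # ts) \<sigma> =
     (if j \<in> orb (prod_transp ts \<sigma>) i
      then tmult R n (omega R n i j) (Fcomp R n ts \<sigma>)
      else Fcomp R n ts \<sigma>)"

text \<open>Possible results of X^rho_a \<otimes> X^sigma_b for basis anyons a, b (any admissible
choice of deconfinements and of the cycle-decomposition used in the algorithm).\<close>
definition fus_basis_out :: "'a fusion_ring \<Rightarrow> nat \<Rightarrow> (nat \<Rightarrow> nat) \<Rightarrow> 'a mla \<Rightarrow>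
    (nat \<Rightarrow> nat) \<Rightarrow> 'a mla \<Rightarrow> 'a defect \<Rightarrow> bool" where
  "fus_basis_out R n \<rho> a \<sigma> b z \<longleftrightarrow>
     (\<exists>cs d1 d2. is_cycle_decomp n \<rho> cs \<and> is_deconf R n \<rho> a d1 \<and> is_deconf R n \<sigma> b d2 \<and>
        z = act R n (tmult R n (tmult R n d1 d2) (Fcomp R n (transp_list cs) \<sigma>))
                    (bare R (\<rho> \<circ> \<sigma>)))"

text \<open>Bilinear extension: z is a possible value of X \<otimes> Y.\<close>
definition fus_rel :: "'a fusion_ring \<Rightarrow> nat \<Rightarrow> 'a defect \<Rightarrow> 'a defect \<Rightarrow> 'a defect \<Rightarrow> bool" where
  "fus_rel R n X Y z \<longleftrightarrow>
     (\<exists>ch. (\<forall>a\<in>fixed_vecs R n (fst X). \<forall>b\<in>fixed_vecs R n (fst Y).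
              fus_basis_out R n (fst X) a (fst Y) b (fst X \<circ> fst Y, ch a b)) \<and>
           z = (fst X \<circ> fst Y, \<lambda>c. \<Sum>a\<in>fixed_vecs R n (fst X). \<Sum>b\<in>fixed_vecs R n (fst Y).
                    snd X a * snd Y b * ch a b c))"

text \<open>Possible values of X^{t_1}_1 \<otimes> (X^{t_2}_1 \<otimes> (... \<otimes> X^{t_m}_1)); the empty
product is the bare identity defect.\<close>
fun nested_outs :: "'a fusion_ring \<Rightarrow> nat \<Rightarrow> (nat \<Rightarrow> nat) list \<Rightarrow> 'a defect set" where
  "nested_outs R n [] = {bare R id}"
| "nested_outs R n [t] = {bare R t}"
| "nested_outs R n (t # t' # ts) =
     {z. \<exists>y\<in>nested_outs R n (t' # ts). fus_rel R n (bare R t) y z}"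

definition is_transposition :: "nat \<Rightarrow> (nat \<Rightarrow> nat) \<Rightarrow> bool" where
  "is_transposition n \<tau> \<longleftrightarrow> (\<exists>i j. i < n \<and> j < n \<and> i \<noteq> j \<and> \<tau> = transpose i j)"

end

theory Submission
  imports Defs "HOL-Combinatorics.Orbits" "HOL-Combinatorics.Cycles"
begin

definition inC :: "'a fusion_ring \<Rightarrow> 'a celem \<Rightarrow> bool" where
  "inC R x \<longleftrightarrow> (\<forall>c. c \<notin> irr R \<longrightarrow> x c = 0)"

definition CP :: "'a fusion_ring \<Rightarrow> nat set \<Rightarrow> (nat \<Rightarrow> 'a celem) \<Rightarrow> 'a celem" where
  "CP R S f = Finite_Set.fold (\<lambda>i acc. cmult R (f i) acc) (cunit R) S"

lemma sum_delta_mult: "finite A \<Longrightarrow> k \<in> A \<Longrightarrow>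
  (\<Sum>a\<in>A. \<Sum>b\<in>B. (if a = k then 1 else 0) * g b * h a b) = (\<Sum>b\<in>B. g b * h k b :: int)"
proof -
  assume A: "finite A" "k \<in> A"
  have "\<And>a. (\<Sum>b\<in>B. (if a = k then 1 else 0) * g b * h a b) = (if a = k then (\<Sum>b\<in>B. g b * h k b) else 0)"
    by simp
  then show ?thesis using A by (simp add: sum.delta)
qed

locale FR =
  fixes R :: "'a fusion_ring"
  assumes fd: "fusion_data R"
begin

lemma fdD: "finite (irr R) \<and>
     one R \<in> irr R \<and>
     (\<forall>a\<in>irr R. dual R a \<in> irr R \<and> dual R (dual R a) = a) \<and>
     (\<forall>a b c. 0 \<le> N R a b c) \<and>
     (\<forall>a b c. a \<notin> irr R \<or> b \<notin> irr R \<or> c \<notin> irr R \<longrightarrow> N R a b c = 0) \<and>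
     (\<forall>a\<in>irr R. \<forall>c\<in>irr R. N R (one R) a c = (if a = c then 1 else 0)) \<and>
     (\<forall>a b c. N R a b c = N R b a c) \<and>
     (\<forall>a\<in>irr R. \<forall>b\<in>irr R. \<forall>c\<in>irr R. \<forall>d\<in>irr R.
        (\<Sum>e\<in>irr R. N R a b e * N R e c d) = (\<Sum>e\<in>irr R. N R b c e * N R a e d)) \<and>
     (\<forall>a\<in>irr R. \<forall>b\<in>irr R. N R a b (one R) = (if b = dual R a then 1 else 0))"
  using fd unfolding fusion_data_def by (elim conjE) (intro conjI)

lemma finI: "finite (irr R)" using fdD by (elim conjE)
lemma oneI: "one R \<in> irr R" using fdD by (elim conjE)
lemma dualI: "a \<in> irr R \<Longrightarrow> dual R a \<in> irr R" using fdD by (elim conjE) blast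
lemma N_nn: "0 \<le> N R a b c" using fdD by (elim conjE) blast
lemma N_out: "a \<notin> irr R \<or> b \<notin> irr R \<or> c \<notin> irr R \<Longrightarrow> N R a b c = 0"
  using fdD by (elim conjE) blast
lemma N_one: "a \<in> irr R \<Longrightarrow> c \<in> irr R \<Longrightarrow> N R (one R) a c = (if a = c then 1 else 0)"
  using fdD by (elim conjE) blast
lemma N_comm: "N R a b c = N R b a c" using fdD by (elim conjE) blast
lemma N_assoc: "a \<in> irr R \<Longrightarrow> b \<in> irr R \<Longrightarrow> c \<in> irr R \<Longrightarrow> d \<in> irr R \<Longrightarrow>
   (\<Sum>e\<in>irr R. N R a b e * N R e c d) = (\<Sum>e\<in>irr R. N R b c e * N R a e d)"
  using fdD by (elim conjE) blast
lemma N_dual: "a \<in> irr R \<Longrightarrow> b \<in> irr R \<Longrightarrow> N R a b (one R) = (if b = dual R a then 1 else 0)"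
  using fdD by (elim conjE) blast

lemma N_one_r: "a \<in> irr R \<Longrightarrow> c \<in> irr R \<Longrightarrow> N R a (one R) c = (if a = c then 1 else 0)"
  using N_one N_comm by metis

lemma cmult_inC: "inC R (cmult R x y)"
  unfolding inC_def cmult_def using N_out by simp

lemma cunit_inC: "inC R (cunit R)"
  unfolding inC_def cunit_def using oneI by auto

lemma cbasis_inC: "a \<in> irr R \<Longrightarrow> inC R (cbasis a)"
  unfolding inC_def cbasis_def by auto

lemma cmult_comm: "cmult R x y = cmult R y x"
  unfolding cmult_def by (rule ext, subst sum.swap) (simp add: N_comm mult_ac)

lemma cmult_cbasis: "a \<in> irr R \<Longrightarrow> cmult R (cbasis a) z c = (\<Sum>e\<in>irr R. z e * N R a e c)"
  unfolding cmult_def cbasis_def by (rule sum_delta_mult[OF finI])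

lemma cunit_cbasis: "cunit R = cbasis (one R)"
  unfolding cunit_def cbasis_def by simp

lemma cmult_unit: "inC R y \<Longrightarrow> cmult R (cunit R) y = y"
proof (rule ext)
  fix c assume y: "inC R y"
  have "cmult R (cunit R) y c = (\<Sum>b\<in>irr R. y b * N R (one R) b c)"
    unfolding cunit_cbasis using oneI by (rule cmult_cbasis)
  also have "\<dots> = y c"
  proof (cases "c \<in> irr R")
    case True
    have "(\<Sum>b\<in>irr R. y b * N R (one R) b c) = (\<Sum>b\<in>irr R. if b = c then y c else 0)"
      using N_one True by (intro sum.cong refl) auto
    then show ?thesis using True finI by simp
  next
    case False
    then show ?thesis using N_out y unfolding inC_def by simp
  qed
  finally show "cmult R (cunit R) y c = y c" .
qed

lemma cmult_unit_r: "inC R y \<Longrightarrow> cmult R y (cunit R) = y"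
  using cmult_unit cmult_comm by metis

lemma cmult_assoc: "cmult R (cmult R x y) z = cmult R x (cmult R y z)"
proof (rule ext)
  fix c
  show "cmult R (cmult R x y) z c = cmult R x (cmult R y z) c"
  proof (cases "c \<in> irr R")
    case False
    then show ?thesis unfolding cmult_def using N_out by simp
  next
    case cI: True
    have "cmult R (cmult R x y) z c =
      (\<Sum>e\<in>irr R. \<Sum>d\<in>irr R. \<Sum>a\<in>irr R. \<Sum>b\<in>irr R. x a * y b * z d * (N R a b e * N R e d c))"
      unfolding cmult_def by (simp add: sum_distrib_left sum_distrib_right mult_ac)
    also have "\<dots> = (\<Sum>a\<in>irr R. \<Sum>b\<in>irr R. \<Sum>d\<in>irr R. \<Sum>e\<in>irr R. x a * y b * z d * (N R a b e * N R e d c))"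
    proof -
      let ?F = "\<lambda>e d a b. x a * y b * z d * (N R a b e * N R e d c)"
      have "(\<Sum>e\<in>irr R. \<Sum>d\<in>irr R. \<Sum>a\<in>irr R. \<Sum>b\<in>irr R. ?F e d a b)
          = (\<Sum>e\<in>irr R. \<Sum>a\<in>irr R. \<Sum>d\<in>irr R. \<Sum>b\<in>irr R. ?F e d a b)"
        by (rule sum.cong[OF refl], rule sum.swap)
      also have "\<dots> = (\<Sum>e\<in>irr R. \<Sum>a\<in>irr R. \<Sum>b\<in>irr R. \<Sum>d\<in>irr R. ?F e d a b)"
        by (rule sum.cong[OF refl], rule sum.cong[OF refl], rule sum.swap)
      also have "\<dots> = (\<Sum>a\<in>irr R. \<Sum>e\<in>irr R. \<Sum>b\<in>irr R. \<Sum>d\<in>irr R. ?F e d a b)"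
        by (rule sum.swap)
      also have "\<dots> = (\<Sum>a\<in>irr R. \<Sum>b\<in>irr R. \<Sum>e\<in>irr R. \<Sum>d\<in>irr R. ?F e d a b)"
        by (rule sum.cong[OF refl], rule sum.swap)
      also have "\<dots> = (\<Sum>a\<in>irr R. \<Sum>b\<in>irr R. \<Sum>d\<in>irr R. \<Sum>e\<in>irr R. ?F e d a b)"
        by (rule sum.cong[OF refl], rule sum.cong[OF refl], rule sum.swap)
      finally show ?thesis .
    qed
    also have "\<dots> = (\<Sum>a\<in>irr R. \<Sum>b\<in>irr R. \<Sum>d\<in>irr R. x a * y b * z d * (\<Sum>e\<in>irr R. N R a b e * N R e d c))"
      by (simp add: sum_distrib_left)
    also have "\<dots> = (\<Sum>a\<in>irr R. \<Sum>b\<in>irr R. \<Sum>d\<in>irr R. x a * y b * z d * (\<Sum>e\<in>irr R. N R b d e * N R a e c))"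
      using N_assoc cI by (intro sum.cong refl) simp
    also have "\<dots> = (\<Sum>a\<in>irr R. \<Sum>b\<in>irr R. \<Sum>d\<in>irr R. \<Sum>e\<in>irr R. x a * y b * z d * (N R b d e * N R a e c))"
      by (simp add: sum_distrib_left)
    also have "\<dots> = (\<Sum>a\<in>irr R. \<Sum>e\<in>irr R. \<Sum>b\<in>irr R. \<Sum>d\<in>irr R. x a * y b * z d * (N R b d e * N R a e c))"
    proof (rule sum.cong[OF refl])
      fix a
      let ?F = "\<lambda>e b d. x a * y b * z d * (N R b d e * N R a e c)"
      have "(\<Sum>b\<in>irr R. \<Sum>d\<in>irr R. \<Sum>e\<in>irr R. ?F e b d) = (\<Sum>b\<in>irr R. \<Sum>e\<in>irr R. \<Sum>d\<in>irr R. ?F e b d)"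
        by (rule sum.cong[OF refl], rule sum.swap)
      also have "\<dots> = (\<Sum>e\<in>irr R. \<Sum>b\<in>irr R. \<Sum>d\<in>irr R. ?F e b d)"
        by (rule sum.swap)
      finally show "(\<Sum>b\<in>irr R. \<Sum>d\<in>irr R. \<Sum>e\<in>irr R. ?F e b d) = (\<Sum>e\<in>irr R. \<Sum>b\<in>irr R. \<Sum>d\<in>irr R. ?F e b d)" .
    qed
    also have "\<dots> = cmult R x (cmult R y z) c"
      unfolding cmult_def by (simp add: sum_distrib_left sum_distrib_right mult_ac)
    finally show ?thesis .
  qed
qed

lemma cmult_lcomm: "cmult R x (cmult R y z) = cmult R y (cmult R x z)"
  by (metis cmult_assoc cmult_comm)

lemma cfc: "comp_fun_commute (\<lambda>i acc. cmult R (f i) acc)"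
  by unfold_locales (simp add: fun_eq_iff cmult_lcomm)

lemma CP_empty[simp]: "CP R {} f = cunit R"
  unfolding CP_def by simp

lemma CP_insert: "finite S \<Longrightarrow> x \<notin> S \<Longrightarrow> CP R (insert x S) f = cmult R (f x) (CP R S f)"
proof -
  assume "finite S" "x \<notin> S"
  interpret comp_fun_commute "\<lambda>i acc. cmult R (f i) acc" by (rule cfc)
  show ?thesis unfolding CP_def using \<open>finite S\<close> \<open>x \<notin> S\<close> by simp
qed

lemma CP_inC: "finite S \<Longrightarrow> inC R (CP R S f)"
  by (induction S rule: finite_induct) (simp_all add: CP_insert cunit_inC cmult_inC)

lemma CP_cong: "finite S \<Longrightarrow> (\<And>i. i \<in> S \<Longrightarrow> f i = g i) \<Longrightarrow> CP R S f = CP R S g"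
  by (induction S rule: finite_induct) (simp_all add: CP_insert)

lemma CP_Un: "finite A \<Longrightarrow> finite B \<Longrightarrow> A \<inter> B = {} \<Longrightarrow>
   CP R (A \<union> B) f = cmult R (CP R A f) (CP R B f)"
proof (induction A rule: finite_induct)
  case empty
  then show ?case by (simp add: cmult_unit CP_inC)
next
  case (insert x A)
  then show ?case by (simp add: CP_insert cmult_assoc)
qed

lemma cmult_swap4: "cmult R (cmult R a b) (cmult R c d) = cmult R (cmult R a c) (cmult R b d)"
  by (simp only: cmult_assoc) (rule arg_cong[where f = "cmult R a"], rule cmult_lcomm)

lemma CP_mult: "finite S \<Longrightarrow> CP R S (\<lambda>i. cmult R (f i) (g i)) = cmult R (CP R S f) (CP R S g)"
proof (induction S rule: finite_induct)
  case empty
  then show ?case by (simp add: cmult_unit cunit_inC)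
next
  case (insert x S)
  have "CP R (insert x S) (\<lambda>i. cmult R (f i) (g i)) = cmult R (cmult R (f x) (g x)) (cmult R (CP R S f) (CP R S g))"
    by (simp only: CP_insert[OF insert(1,2)] insert(3))
  also have "\<dots> = cmult R (cmult R (f x) (CP R S f)) (cmult R (g x) (CP R S g))"
    by (rule cmult_swap4)
  finally show ?case by (simp only: CP_insert[OF insert(1,2)])
qed

lemma CP_unit: "finite S \<Longrightarrow> CP R S (\<lambda>_. cunit R) = cunit R"
  by (induction S rule: finite_induct) (simp_all add: CP_insert cmult_unit cunit_inC)

lemma CP_Union: "finite F \<Longrightarrow> (\<forall>A\<in>F. finite A) \<Longrightarrow>
   (\<forall>A\<in>F. \<forall>B\<in>F. A \<noteq> B \<longrightarrow> A \<inter> B = {}) \<Longrightarrow> (\<forall>A\<in>F. CP R A f = cunit R) \<Longrightarrow>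
   CP R (\<Union>F) f = cunit R"
proof (induction F rule: finite_induct)
  case empty
  then show ?case by simp
next
  case (insert A F)
  have fA: "finite A" and fU: "finite (\<Union>F)" using insert.prems(1) insert.hyps(1) by auto
  have d: "A \<inter> \<Union>F = {}"
  proof -
    have "\<forall>B\<in>F. A \<inter> B = {}" using insert.prems(2) insert.hyps(2) by (metis insertCI)
    then show ?thesis by blast
  qed
  have p1: "\<forall>A\<in>F. finite A" using insert.prems(1) by blast
  have p2: "\<forall>A\<in>F. \<forall>B\<in>F. A \<noteq> B \<longrightarrow> A \<inter> B = {}" using insert.prems(2) by blast
  have p3: "\<forall>A\<in>F. CP R A f = cunit R" using insert.prems(3) by blast
  have IH: "CP R (\<Union>F) f = cunit R" using insert.IH[OF p1 p2 p3] .
  have A1: "CP R A f = cunit R" using insert.prems(3) by blast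
  have "CP R (\<Union>(insert A F)) f = CP R (A \<union> \<Union>F) f" by simp
  also have "\<dots> = cmult R (CP R A f) (CP R (\<Union>F) f)"
    by (rule CP_Un[OF fA fU d])
  also have "\<dots> = cunit R" unfolding A1 IH by (rule cmult_unit[OF cunit_inC])
  finally show ?case .
qed

lemma CP_list: "distinct L \<Longrightarrow> cprod_list R (map v L) = CP R (set L) (\<lambda>k. cbasis (v k))"
proof (induction L)
  case Nil
  then show ?case by (simp add: cprod_list_def)
next
  case (Cons x L)
  then show ?case by (simp add: cprod_list_def CP_insert)
qed

lemma cmult_nn: "(\<And>y. 0 \<le> f y) \<Longrightarrow> (\<And>y. 0 \<le> g y) \<Longrightarrow> 0 \<le> cmult R f g c"
  unfolding cmult_def by (intro sum_nonneg mult_nonneg_nonneg) (simp_all add: N_nn)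

lemma CP_nn: "finite S \<Longrightarrow> (\<And>i y. i \<in> S \<Longrightarrow> 0 \<le> f i y) \<Longrightarrow> 0 \<le> CP R S f c"
proof (induction S arbitrary: c rule: finite_induct)
  case empty
  then show ?case by (simp add: cunit_def)
next
  case (insert x S)
  then show ?case by (simp add: CP_insert cmult_nn)
qed

lemma N_ex: "a \<in> irr R \<Longrightarrow> e \<in> irr R \<Longrightarrow> \<exists>y\<in>irr R. 0 < N R a e y"
proof (rule ccontr)
  assume a: "a \<in> irr R" and e: "e \<in> irr R" and ne: "\<not> (\<exists>y\<in>irr R. 0 < N R a e y)"
  have z: "\<And>y. y \<in> irr R \<Longrightarrow> N R a e y = 0" using ne N_nn by (meson not_less order_antisym)
  have "(\<Sum>y\<in>irr R. N R a e y * N R y (dual R e) a) = (\<Sum>y\<in>irr R. N R e (dual R e) y * N R a y a)"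
    by (rule N_assoc[OF a e dualI[OF e] a])
  moreover have "(\<Sum>y\<in>irr R. N R a e y * N R y (dual R e) a) = 0" using z by simp
  moreover have "N R e (dual R e) (one R) * N R a (one R) a \<le> (\<Sum>y\<in>irr R. N R e (dual R e) y * N R a y a)"
    using oneI finI by (intro member_le_sum) (simp_all add: N_nn)
  moreover have "N R e (dual R e) (one R) * N R a (one R) a = 1"
    using N_dual N_one_r a e dualI by simp
  ultimately show False by linarith
qed

lemma cmult_cbasis_pos: "a \<in> irr R \<Longrightarrow> e \<in> irr R \<Longrightarrow> 0 < z e \<Longrightarrow> (\<And>y. 0 \<le> z y) \<Longrightarrow>
   \<exists>y\<in>irr R. 0 < cmult R (cbasis a) z y"
proof -
  assume a: "a \<in> irr R" and e: "e \<in> irr R" and ze: "0 < z e" and nn: "\<And>y. 0 \<le> z y"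
  obtain y where y: "y \<in> irr R" "0 < N R a e y" using N_ex a e by blast
  have "z e * N R a e y \<le> (\<Sum>e'\<in>irr R. z e' * N R a e' y)"
    using e finI nn by (intro member_le_sum) (simp_all add: N_nn)
  moreover have "0 < z e * N R a e y" using ze y by simp
  ultimately show ?thesis using y cmult_cbasis[OF a] by (intro bexI[of _ y]) auto
qed

lemma CP_pos: "finite S \<Longrightarrow> (\<And>i. i \<in> S \<Longrightarrow> v i \<in> irr R) \<Longrightarrow>
   \<exists>y\<in>irr R. 0 < CP R S (\<lambda>k. cbasis (v k)) y"
proof (induction S rule: finite_induct)
  case empty
  then show ?case using oneI by (auto simp: cunit_def)
next
  case (insert x S)
  then obtain e where e: "e \<in> irr R" "0 < CP R S (\<lambda>k. cbasis (v k)) e" by auto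
  have nn: "\<And>y. 0 \<le> CP R S (\<lambda>k. cbasis (v k)) y"
    using insert by (intro CP_nn) (auto simp: cbasis_def)
  have vx: "v x \<in> irr R" using insert by simp
  obtain y where "y \<in> irr R" "0 < cmult R (cbasis (v x)) (CP R S (\<lambda>k. cbasis (v k))) y"
    using cmult_cbasis_pos[of "v x" e "CP R S (\<lambda>k. cbasis (v k))", OF vx e(1) e(2) nn] by blast
  moreover have "CP R (insert x S) (\<lambda>k. cbasis (v k)) = cmult R (cbasis (v x)) (CP R S (\<lambda>k. cbasis (v k)))"
    by (rule CP_insert[OF insert(1,2)])
  ultimately show ?case by auto
qed

end

lemma perm_of: "\<tau> permutes {..<(n::nat)} \<Longrightarrow> permutation \<tau>"
  unfolding permutation_permutes by (rule exI[of _ "{..<n}"]) simp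

lemma orb_orbit: "\<tau> permutes {..<n} \<Longrightarrow> orb \<tau> k = orbit \<tau> k"
  unfolding orb_def by (rule orbit_altdef_permutation[OF perm_of, symmetric])

lemma orb_self: "k \<in> orb \<tau> k"
  unfolding orb_def by (auto intro: exI[of _ 0])

lemma orb_funpow: "x \<in> orb \<tau> k \<Longrightarrow> (\<tau> ^^ m) x \<in> orb \<tau> k"
  unfolding orb_def by (auto, metis comp_apply funpow_add)

lemma orb_step: "x \<in> orb \<tau> k \<Longrightarrow> \<tau> x \<in> orb \<tau> k"
  using orb_funpow[of x \<tau> k 1] by simp

lemma orb_same: "\<tau> permutes {..<n} \<Longrightarrow> x \<in> orb \<tau> k \<Longrightarrow> orb \<tau> x = orb \<tau> k"
proof -
  assume p: "\<tau> permutes {..<n}" and x: "x \<in> orb \<tau> k"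
  have pm: "permutation \<tau>" using perm_of[OF p] .
  have xk: "x \<in> orbit \<tau> k" using x orb_orbit[OF p] by simp
  have kk: "k \<in> orbit \<tau> k" using permutation_self_in_orbit[OF pm] .
  have kx: "k \<in> orbit \<tau> x" using orbit_swap[OF kk xk] .
  have "orbit \<tau> x \<subseteq> orbit \<tau> k" using orbit_trans[OF _ xk] by (rule subsetI)
  moreover have "orbit \<tau> k \<subseteq> orbit \<tau> x" using orbit_trans[OF _ kx] by (rule subsetI)
  ultimately show ?thesis using orb_orbit[OF p] by simp
qed

lemma orb_sym: "\<tau> permutes {..<n} \<Longrightarrow> x \<in> orb \<tau> k \<Longrightarrow> k \<in> orb \<tau> x"
  using orb_same[of \<tau> n x k] orb_self[of k \<tau>] by simp

lemma orb_bound: "\<tau> permutes {..<n} \<Longrightarrow> k < n \<Longrightarrow> orb \<tau> k \<subseteq> {..<n}"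
proof
  fix x assume p: "\<tau> permutes {..<n}" and k: "k < n" and x: "x \<in> orb \<tau> k"
  then obtain j where xj: "x = (\<tau> ^^ j) k" unfolding orb_def by blast
  have "(\<tau> ^^ j) k < n"
  proof (induction j)
    case 0 then show ?case using k by simp
  next
    case (Suc j) then show ?case using permutes_in_image[OF p, of "(\<tau> ^^ j) k"] by simp
  qed
  then show "x \<in> {..<n}" using xj by simp
qed

lemma orb_finite: "\<tau> permutes {..<n} \<Longrightarrow> k < n \<Longrightarrow> finite (orb \<tau> k)"
  using finite_subset[OF orb_bound[of \<tau> n k]] by simp

lemma orb_fixpt: "\<tau> permutes {..<n} \<Longrightarrow> \<tau> y = y \<Longrightarrow> y \<in> orb \<tau> x \<Longrightarrow> x = y"
proof -
  assume p: "\<tau> permutes {..<n}" and y: "\<tau> y = y" and yx: "y \<in> orb \<tau> x"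
  have "orb \<tau> y = {y}"
  proof -
    have "(\<tau> ^^ j) y = y" for j by (induction j) (simp_all add: y)
    then show ?thesis unfolding orb_def by auto
  qed
  moreover have "x \<in> orb \<tau> y" using orb_sym[OF p yx] .
  ultimately show ?thesis by simp
qed

lemma orbits_fin: "finite (orbits n \<tau>)"
  unfolding orbits_def by simp

lemma orbitsE: "Ob \<in> orbits n \<tau> \<Longrightarrow> (\<And>k. k < n \<Longrightarrow> Ob = orb \<tau> k \<Longrightarrow> P) \<Longrightarrow> P"
  unfolding orbits_def by auto

lemma orbit_Min: "\<tau> permutes {..<n} \<Longrightarrow> Ob \<in> orbits n \<tau> \<Longrightarrow>
   Min Ob \<in> Ob \<and> Min Ob < n \<and> orb \<tau> (Min Ob) = Ob \<and> finite Ob \<and> Ob \<subseteq> {..<n}"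
proof -
  assume p: "\<tau> permutes {..<n}" and Ob: "Ob \<in> orbits n \<tau>"
  obtain k where k: "k < n" "Ob = orb \<tau> k" using orbitsE[OF Ob] by blast
  have f: "finite Ob" using orb_finite[OF p k(1)] k by simp
  have ne: "Ob \<noteq> {}" using orb_self k by auto
  have m: "Min Ob \<in> Ob" using Min_in[OF f ne] .
  have b: "Ob \<subseteq> {..<n}" using orb_bound[OF p k(1)] k by simp
  show ?thesis using m b f orb_same[OF p, of "Min Ob" k] k by auto
qed

lemma orbit_of: "\<tau> permutes {..<n} \<Longrightarrow> Ob \<in> orbits n \<tau> \<Longrightarrow> x \<in> Ob \<Longrightarrow> orb \<tau> x = Ob"
proof -
  assume p: "\<tau> permutes {..<n}" and Ob: "Ob \<in> orbits n \<tau>" and x: "x \<in> Ob"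
  obtain k where k: "k < n" "Ob = orb \<tau> k" using orbitsE[OF Ob] by blast
  show ?thesis using orb_same[OF p, of x k] x k by simp
qed

lemma orb_in_orbits: "k < n \<Longrightarrow> orb \<tau> k \<in> orbits n \<tau>"
  unfolding orbits_def by simp

definition e1 :: "'a fusion_ring \<Rightarrow> 'a mla" where "e1 R = (\<lambda>_. one R)"

lemma fixed_const: "\<tau> permutes {..<n} \<Longrightarrow> a \<in> fixed_vecs R n \<tau> \<Longrightarrow> k < n \<Longrightarrow> x \<in> orb \<tau> k \<Longrightarrow> a x = a k"
proof -
  assume p: "\<tau> permutes {..<n}" and a: "a \<in> fixed_vecs R n \<tau>" and k: "k < n" and x: "x \<in> orb \<tau> k"
  obtain j where xj: "x = (\<tau> ^^ j) k" using x unfolding orb_def by blast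
  have "a ((\<tau> ^^ j) k) = a k"
  proof (induction j)
    case 0 then show ?case by simp
  next
    case (Suc j)
    have "(\<tau> ^^ j) k \<in> orb \<tau> k" unfolding orb_def by blast
    then have "(\<tau> ^^ j) k < n" using orb_bound[OF p k] by auto
    then show ?case using a Suc unfolding fixed_vecs_def by simp
  qed
  then show ?thesis using xj by simp
qed

lemma fixed_valid: "a \<in> fixed_vecs R n \<tau> \<Longrightarrow> a \<in> valid R n"
  unfolding fixed_vecs_def by simp

lemma fixed_eq: "\<tau> permutes {..<n} \<Longrightarrow> a \<in> fixed_vecs R n \<tau> \<Longrightarrow> c \<in> fixed_vecs R n \<tau> \<Longrightarrow>
   (\<forall>Ob\<in>orbits n \<tau>. a (Min Ob) = c (Min Ob)) \<Longrightarrow> a = c"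
proof (rule ext)
  fix k assume p: "\<tau> permutes {..<n}" and a: "a \<in> fixed_vecs R n \<tau>" and c: "c \<in> fixed_vecs R n \<tau>"
    and e: "\<forall>Ob\<in>orbits n \<tau>. a (Min Ob) = c (Min Ob)"
  show "a k = c k"
  proof (cases "k < n")
    case True
    let ?Ob = "orb \<tau> k"
    have Ob: "?Ob \<in> orbits n \<tau>" using True by (rule orb_in_orbits)
    have m: "Min ?Ob \<in> ?Ob" using orbit_Min[OF p Ob] by simp
    have "a k = a (Min ?Ob)" using fixed_const[OF p a True m] by simp
    also have "\<dots> = c (Min ?Ob)" using e Ob by blast
    also have "\<dots> = c k" using fixed_const[OF p c True m] by simp
    finally show ?thesis .
  next
    case False
    then show ?thesis using a c unfolding fixed_vecs_def valid_def by simp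
  qed
qed

lemma prod_delta_orbits: "\<tau> permutes {..<n} \<Longrightarrow> a \<in> fixed_vecs R n \<tau> \<Longrightarrow> c \<in> fixed_vecs R n \<tau> \<Longrightarrow>
  (\<Prod>Ob\<in>orbits n \<tau>. (if a (Min Ob) = c (Min Ob) then 1 else 0 :: int)) = (if a = c then 1 else 0)"
proof (cases "\<forall>Ob\<in>orbits n \<tau>. a (Min Ob) = c (Min Ob)")
  case True
  assume p: "\<tau> permutes {..<n}" "a \<in> fixed_vecs R n \<tau>" "c \<in> fixed_vecs R n \<tau>"
  then show ?thesis using True fixed_eq[OF p True] by simp
next
  case False
  then obtain Ob where Ob: "Ob \<in> orbits n \<tau>" "a (Min Ob) \<noteq> c (Min Ob)" by blast
  then have "a \<noteq> c" by auto
  moreover have "(\<Prod>Ob\<in>orbits n \<tau>. (if a (Min Ob) = c (Min Ob) then 1 else 0 :: int)) = 0"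
    using Ob orbits_fin by (intro prod_zero) auto
  ultimately show ?thesis by simp
qed

context FR begin

lemma e1_valid: "e1 R \<in> valid R n"
  unfolding e1_def valid_def using oneI by simp

lemma e1_fixed: "e1 R \<in> fixed_vecs R n \<tau>"
  unfolding fixed_vecs_def e1_def using e1_valid[unfolded e1_def] by simp

lemma tunit_e1: "tunit R = tbasis (e1 R)"
  unfolding tunit_def e1_def by simp

lemma valid_fin: "finite (valid R n)"
proof -
  let ?ext = "\<lambda>c i. if i < n then c i else one R"
  have "valid R n \<subseteq> ?ext ` PiE {..<n} (\<lambda>_. irr R)"
  proof
    fix v assume v: "v \<in> valid R n"
    have "v = ?ext (restrict v {..<n})" using v unfolding valid_def by (auto simp: fun_eq_iff)
    moreover have "restrict v {..<n} \<in> PiE {..<n} (\<lambda>_. irr R)" using v unfolding valid_def by auto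
    ultimately show "v \<in> ?ext ` PiE {..<n} (\<lambda>_. irr R)" by blast
  qed
  moreover have "finite (PiE {..<n} (\<lambda>_. irr R))" using finI by (intro finite_PiE) auto
  ultimately show ?thesis using finite_subset by blast
qed

lemma fixed_fin: "finite (fixed_vecs R n \<tau>)"
  using valid_fin unfolding fixed_vecs_def by simp

lemma valid_irr: "v \<in> valid R n \<Longrightarrow> i < n \<Longrightarrow> v i \<in> irr R"
  unfolding valid_def by simp

lemma rmult_unit: "\<tau> permutes {..<n} \<Longrightarrow> (\<And>a. a \<notin> fixed_vecs R n \<tau> \<Longrightarrow> r a = 0) \<Longrightarrow>
   rmult R n \<tau> r (tunit R) = r"
proof (rule ext)
  fix c assume p: "\<tau> permutes {..<n}" and r: "\<And>a. a \<notin> fixed_vecs R n \<tau> \<Longrightarrow> r a = 0"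
  show "rmult R n \<tau> r (tunit R) c = r c"
  proof (cases "c \<in> fixed_vecs R n \<tau>")
    case False then show ?thesis using r unfolding rmult_def by simp
  next
    case cf: True
    have "rmult R n \<tau> r (tunit R) c = (\<Sum>a\<in>fixed_vecs R n \<tau>. \<Sum>b\<in>fixed_vecs R n \<tau>.
          r a * tbasis (e1 R) b * (\<Prod>Ob\<in>orbits n \<tau>. N R (a (Min Ob)) (b (Min Ob)) (c (Min Ob))))"
      using cf unfolding rmult_def tunit_e1 by simp
    also have "\<dots> = (\<Sum>a\<in>fixed_vecs R n \<tau>. r a * (\<Prod>Ob\<in>orbits n \<tau>. N R (a (Min Ob)) (one R) (c (Min Ob))))"
    proof (rule sum.cong[OF refl])
      fix a assume "a \<in> fixed_vecs R n \<tau>"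
      have "(\<Sum>b\<in>fixed_vecs R n \<tau>. r a * tbasis (e1 R) b * (\<Prod>Ob\<in>orbits n \<tau>. N R (a (Min Ob)) (b (Min Ob)) (c (Min Ob))))
        = (\<Sum>b\<in>fixed_vecs R n \<tau>. if b = e1 R then r a * (\<Prod>Ob\<in>orbits n \<tau>. N R (a (Min Ob)) (one R) (c (Min Ob))) else 0)"
        by (intro sum.cong refl) (auto simp: tbasis_def e1_def)
      also have "\<dots> = r a * (\<Prod>Ob\<in>orbits n \<tau>. N R (a (Min Ob)) (one R) (c (Min Ob)))"
        using fixed_fin e1_fixed by (simp add: sum.delta')
      finally show "(\<Sum>b\<in>fixed_vecs R n \<tau>. r a * tbasis (e1 R) b * (\<Prod>Ob\<in>orbits n \<tau>. N R (a (Min Ob)) (b (Min Ob)) (c (Min Ob))))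
        = r a * (\<Prod>Ob\<in>orbits n \<tau>. N R (a (Min Ob)) (one R) (c (Min Ob)))" .
    qed
    also have "\<dots> = (\<Sum>a\<in>fixed_vecs R n \<tau>. r a * (if a = c then 1 else 0))"
    proof (rule sum.cong[OF refl])
      fix a assume a: "a \<in> fixed_vecs R n \<tau>"
      have "(\<Prod>Ob\<in>orbits n \<tau>. N R (a (Min Ob)) (one R) (c (Min Ob))) =
            (\<Prod>Ob\<in>orbits n \<tau>. (if a (Min Ob) = c (Min Ob) then 1 else 0))"
      proof (rule prod.cong[OF refl])
        fix Ob assume Ob: "Ob \<in> orbits n \<tau>"
        have "Min Ob < n" using orbit_Min[OF p Ob] by simp
        then have "a (Min Ob) \<in> irr R" "c (Min Ob) \<in> irr R"
          using a cf fixed_valid valid_irr by blast+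
        then show "N R (a (Min Ob)) (one R) (c (Min Ob)) = (if a (Min Ob) = c (Min Ob) then 1 else 0)"
          by (rule N_one_r)
      qed
      also have "\<dots> = (if a = c then 1 else 0)" using prod_delta_orbits[OF p a cf] .
      finally show "r a * (\<Prod>Ob\<in>orbits n \<tau>. N R (a (Min Ob)) (one R) (c (Min Ob))) = r a * (if a = c then 1 else 0)"
        by simp
    qed
    also have "\<dots> = r c" using cf fixed_fin by (simp add: sum.delta' if_distrib cong: if_cong)
    finally show ?thesis .
  qed
qed

lemma conf_out: "b \<notin> fixed_vecs R n \<tau> \<Longrightarrow> conf R n \<tau> x b = 0"
  unfolding conf_def by simp

lemma act_bare: "\<tau> permutes {..<n} \<Longrightarrow> act R n d (bare R \<tau>) = (\<tau>, conf R n \<tau> d)"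
  unfolding act_def bare_def runit_def using rmult_unit conf_out by simp

lemma conf_CP: "\<tau> permutes {..<n} \<Longrightarrow> b \<in> fixed_vecs R n \<tau> \<Longrightarrow>
  conf R n \<tau> x b = (\<Sum>a\<in>valid R n. x a * (\<Prod>Ob\<in>orbits n \<tau>. CP R Ob (\<lambda>k. cbasis (a k)) (b (Min Ob))))"
proof -
  assume p: "\<tau> permutes {..<n}" and b: "b \<in> fixed_vecs R n \<tau>"
  have "\<And>Ob a. Ob \<in> orbits n \<tau> \<Longrightarrow> cprod_list R (map a (sorted_list_of_set Ob)) = CP R Ob (\<lambda>k. cbasis (a k))"
    using orbit_Min[OF p] CP_list by (metis distinct_sorted_list_of_set set_sorted_list_of_set)
  then show ?thesis unfolding conf_def using b by (simp cong: prod.cong)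
qed

end

context FR begin

lemma multilin: "finite S \<Longrightarrow> (\<forall>i\<in>S. inC R (g i)) \<Longrightarrow>
  CP R S g y = (\<Sum>c\<in>PiE S (\<lambda>_. irr R). (\<Prod>i\<in>S. g i (c i)) * CP R S (\<lambda>k. cbasis (c k)) y)"
proof (induction S arbitrary: y rule: finite_induct)
  case empty
  then show ?case by simp
next
  case (insert x S)
  have gS: "\<forall>i\<in>S. inC R (g i)" using insert.prems by simp
  have IH: "\<And>e. CP R S g e = (\<Sum>c\<in>PiE S (\<lambda>_. irr R). (\<Prod>i\<in>S. g i (c i)) * CP R S (\<lambda>k. cbasis (c k)) e)"
    using insert.IH[OF gS] .
  have gx: "inC R (g x)" using insert.prems by simp
  have finP: "finite (PiE S (\<lambda>_. irr R))" using insert.hyps(1) finI by (intro finite_PiE) auto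
  have "CP R (insert x S) g y = cmult R (g x) (CP R S g) y"
    by (simp add: CP_insert[OF insert.hyps])
  also have "\<dots> = (\<Sum>a\<in>irr R. \<Sum>e\<in>irr R. g x a * CP R S g e * N R a e y)"
    unfolding cmult_def ..
  also have "\<dots> = (\<Sum>a\<in>irr R. \<Sum>e\<in>irr R. \<Sum>c\<in>PiE S (\<lambda>_. irr R).
        g x a * ((\<Prod>i\<in>S. g i (c i)) * CP R S (\<lambda>k. cbasis (c k)) e) * N R a e y)"
    unfolding IH by (simp add: sum_distrib_left sum_distrib_right)
  also have "\<dots> = (\<Sum>a\<in>irr R. \<Sum>c\<in>PiE S (\<lambda>_. irr R). \<Sum>e\<in>irr R.
        g x a * ((\<Prod>i\<in>S. g i (c i)) * CP R S (\<lambda>k. cbasis (c k)) e) * N R a e y)"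
    by (rule sum.cong[OF refl], rule sum.swap)
  also have "\<dots> = (\<Sum>a\<in>irr R. \<Sum>c\<in>PiE S (\<lambda>_. irr R).
        g x a * (\<Prod>i\<in>S. g i (c i)) * cmult R (cbasis a) (CP R S (\<lambda>k. cbasis (c k))) y)"
  proof (rule sum.cong[OF refl], rule sum.cong[OF refl])
    fix a c assume a: "a \<in> irr R"
    show "(\<Sum>e\<in>irr R. g x a * ((\<Prod>i\<in>S. g i (c i)) * CP R S (\<lambda>k. cbasis (c k)) e) * N R a e y) =
        g x a * (\<Prod>i\<in>S. g i (c i)) * cmult R (cbasis a) (CP R S (\<lambda>k. cbasis (c k))) y"
      unfolding cmult_cbasis[OF a] by (simp add: sum_distrib_left mult_ac)
  qed
  also have "\<dots> = (\<Sum>(a, c)\<in>irr R \<times> PiE S (\<lambda>_. irr R).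
        g x a * (\<Prod>i\<in>S. g i (c i)) * cmult R (cbasis a) (CP R S (\<lambda>k. cbasis (c k))) y)"
    by (rule sum.cartesian_product)
  also have "\<dots> = (\<Sum>c\<in>PiE (insert x S) (\<lambda>_. irr R). (\<Prod>i\<in>insert x S. g i (c i)) *
        CP R (insert x S) (\<lambda>k. cbasis (c k)) y)"
  proof (rule sum.reindex_bij_witness[of _ "\<lambda>c. (c x, c(x := undefined))" "\<lambda>(a, c). c(x := a)"])
    fix ac assume ac: "ac \<in> irr R \<times> PiE S (\<lambda>_. irr R)"
    obtain a c where acd: "ac = (a, c)" by fastforce
    have a: "a \<in> irr R" and c: "c \<in> PiE S (\<lambda>_. irr R)" using ac acd by auto
    have cx: "c x = undefined" using c insert.hyps(2) by (auto simp: PiE_def extensional_def)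
    show "(\<lambda>c. (c x, c(x := undefined))) (case ac of (a, c) \<Rightarrow> c(x := a)) = ac"
      using acd cx by (simp add: fun_eq_iff)
    show "(case ac of (a, c) \<Rightarrow> c(x := a)) \<in> PiE (insert x S) (\<lambda>_. irr R)"
      using acd a c by (simp add: PiE_fun_upd)
    have p: "(\<Prod>i\<in>insert x S. g i ((c(x := a)) i)) = g x a * (\<Prod>i\<in>S. g i (c i))"
    proof -
      have "(\<Prod>i\<in>S. g i ((c(x := a)) i)) = (\<Prod>i\<in>S. g i (c i))"
        using insert.hyps(2) by (intro prod.cong refl) auto
      then show ?thesis using insert.hyps by simp
    qed
    have q: "CP R (insert x S) (\<lambda>k. cbasis ((c(x := a)) k)) = cmult R (cbasis a) (CP R S (\<lambda>k. cbasis (c k)))"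
    proof -
      have "CP R (insert x S) (\<lambda>k. cbasis ((c(x := a)) k)) = cmult R (cbasis a) (CP R S (\<lambda>k. cbasis ((c(x := a)) k)))"
        using CP_insert[OF insert.hyps, of "\<lambda>k. cbasis ((c(x := a)) k)"] by simp
      moreover have "CP R S (\<lambda>k. cbasis ((c(x := a)) k)) = CP R S (\<lambda>k. cbasis (c k))"
        using insert.hyps by (intro CP_cong) auto
      ultimately show ?thesis by simp
    qed
    show "(\<Prod>i\<in>insert x S. g i ((case ac of (a, c) \<Rightarrow> c(x := a)) i)) *
        CP R (insert x S) (\<lambda>k. cbasis ((case ac of (a, c) \<Rightarrow> c(x := a)) k)) y =
      (case ac of (a, c) \<Rightarrow> g x a * (\<Prod>i\<in>S. g i (c i)) * cmult R (cbasis a) (CP R S (\<lambda>k. cbasis (c k))) y)"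
      using acd p q by simp
  next
    fix c assume c: "c \<in> PiE (insert x S) (\<lambda>_. irr R)"
    show "(case (c x, c(x := undefined)) of (a, c) \<Rightarrow> c(x := a)) = c" by simp
    show "(c x, c(x := undefined)) \<in> irr R \<times> PiE S (\<lambda>_. irr R)"
      using c insert.hyps(2) by (auto intro: fun_upd_in_PiE PiE_mem)
  qed
  finally show ?case .
qed

lemma GL:
  assumes finP: "finite P" and sub: "\<forall>B\<in>P. B \<subseteq> {..<n}"
    and bet: "\<forall>i<n. \<beta> i \<in> P \<and> i \<in> \<beta> i" and bet2: "\<forall>B\<in>P. \<forall>i\<in>B. \<beta> i = B"
    and gC: "\<forall>i<n. inC R (g i)"
  shows "(\<Sum>c\<in>valid R n. (\<Prod>i<n. g i (c i)) * (\<Prod>B\<in>P. CP R B (\<lambda>k. cbasis (c k)) (y B)))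
       = (\<Prod>B\<in>P. CP R B g (y B))"
proof -
  let ?I = "\<lambda>_::nat. irr R"
  define h where "h B c = (\<Prod>i\<in>B. g i (c i)) * CP R B (\<lambda>k. cbasis (c k)) (y B)" for B c
  have finB: "\<And>B. B \<in> P \<Longrightarrow> finite B" using sub finite_subset by blast
  have "(\<Prod>B\<in>P. CP R B g (y B)) = (\<Prod>B\<in>P. \<Sum>c\<in>PiE B ?I. h B c)"
  proof (rule prod.cong[OF refl])
    fix B assume B: "B \<in> P"
    have "\<forall>i\<in>B. inC R (g i)" using gC sub B by blast
    then show "CP R B g (y B) = (\<Sum>c\<in>PiE B ?I. h B c)"
      unfolding h_def using multilin[OF finB[OF B]] by blast
  qed
  also have "\<dots> = (\<Sum>p\<in>PiE P (\<lambda>B. PiE B ?I). \<Prod>B\<in>P. h B (p B))"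
    using finP finB finI by (intro prod_sum_PiE) (auto intro: finite_PiE)
  also have "\<dots> = (\<Sum>c\<in>valid R n. \<Prod>B\<in>P. h B (restrict c B))"
  proof (rule sym, rule sum.reindex_bij_witness[of _ "\<lambda>p k. if k < n then p (\<beta> k) k else one R" "\<lambda>c. \<lambda>B\<in>P. restrict c B"])
    fix c assume c: "c \<in> valid R n"
    show "(\<lambda>k. if k < n then (\<lambda>B\<in>P. restrict c B) (\<beta> k) k else one R) = c"
    proof (rule ext)
      fix k show "(if k < n then (\<lambda>B\<in>P. restrict c B) (\<beta> k) k else one R) = c k"
        using bet c unfolding valid_def by auto
    qed
    show "(\<lambda>B\<in>P. restrict c B) \<in> PiE P (\<lambda>B. PiE B ?I)"
    proof -
      have "\<And>B. B \<in> P \<Longrightarrow> restrict c B \<in> PiE B ?I"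
        using c sub unfolding valid_def by auto
      then show ?thesis by auto
    qed
    show "(\<Prod>B\<in>P. h B ((\<lambda>B\<in>P. restrict c B) B)) = (\<Prod>B\<in>P. h B (restrict c B))"
      by (intro prod.cong refl) simp
  next
    fix p assume p: "p \<in> PiE P (\<lambda>B. PiE B ?I)"
    show "(\<lambda>B\<in>P. restrict (\<lambda>k. if k < n then p (\<beta> k) k else one R) B) = p"
    proof (rule ext)
      fix B show "(\<lambda>B\<in>P. restrict (\<lambda>k. if k < n then p (\<beta> k) k else one R) B) B = p B"
      proof (cases "B \<in> P")
        case False then show ?thesis using p by (auto simp: PiE_def extensional_def)
      next
        case True
        have pB: "p B \<in> PiE B ?I" using p True by auto
        show ?thesis
        proof (rule ext)
          fix i show "(\<lambda>B\<in>P. restrict (\<lambda>k. if k < n then p (\<beta> k) k else one R) B) B i = p B i"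
          proof (cases "i \<in> B")
            case True
            then have "i < n" "\<beta> i = B" using sub bet2 \<open>B \<in> P\<close> by auto
            then show ?thesis using True \<open>B \<in> P\<close> by simp
          next
            case False
            then show ?thesis using pB \<open>B \<in> P\<close> by (auto simp: PiE_def extensional_def)
          qed
        qed
      qed
    qed
    show "(\<lambda>k. if k < n then p (\<beta> k) k else one R) \<in> valid R n"
    proof -
      have "\<And>k. k < n \<Longrightarrow> p (\<beta> k) k \<in> irr R"
      proof -
        fix k assume k: "k < n"
        have "p (\<beta> k) \<in> PiE (\<beta> k) ?I" using p bet k by auto
        then show "p (\<beta> k) k \<in> irr R" using bet k by auto
      qed
      then show ?thesis unfolding valid_def by auto
    qed
  qed
  also have "\<dots> = (\<Sum>c\<in>valid R n. (\<Prod>B\<in>P. \<Prod>i\<in>B. g i (c i)) * (\<Prod>B\<in>P. CP R B (\<lambda>k. cbasis (c k)) (y B)))"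
  proof (rule sum.cong[OF refl])
    fix c assume c: "c \<in> valid R n"
    have "\<And>B. B \<in> P \<Longrightarrow> h B (restrict c B) = (\<Prod>i\<in>B. g i (c i)) * CP R B (\<lambda>k. cbasis (c k)) (y B)"
    proof -
      fix B assume B: "B \<in> P"
      have "(\<Prod>i\<in>B. g i (restrict c B i)) = (\<Prod>i\<in>B. g i (c i))" by (intro prod.cong refl) simp
      moreover have "CP R B (\<lambda>k. cbasis (restrict c B k)) = CP R B (\<lambda>k. cbasis (c k))"
        using finB[OF B] by (intro CP_cong) auto
      ultimately show "h B (restrict c B) = (\<Prod>i\<in>B. g i (c i)) * CP R B (\<lambda>k. cbasis (c k)) (y B)"
        unfolding h_def by simp
    qed
    then have "(\<Prod>B\<in>P. h B (restrict c B)) = (\<Prod>B\<in>P. (\<Prod>i\<in>B. g i (c i)) * CP R B (\<lambda>k. cbasis (c k)) (y B))"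
      by (intro prod.cong refl) simp
    also have "\<dots> = (\<Prod>B\<in>P. \<Prod>i\<in>B. g i (c i)) * (\<Prod>B\<in>P. CP R B (\<lambda>k. cbasis (c k)) (y B))"
      by (rule prod.distrib)
    finally show "(\<Prod>B\<in>P. h B (restrict c B)) = (\<Prod>B\<in>P. \<Prod>i\<in>B. g i (c i)) * (\<Prod>B\<in>P. CP R B (\<lambda>k. cbasis (c k)) (y B))" .
  qed
  also have "\<dots> = (\<Sum>c\<in>valid R n. (\<Prod>i<n. g i (c i)) * (\<Prod>B\<in>P. CP R B (\<lambda>k. cbasis (c k)) (y B)))"
  proof -
    have U: "\<Union>P = {..<n}" using sub bet by blast
    have D: "\<forall>A\<in>P. \<forall>B\<in>P. A \<noteq> B \<longrightarrow> A \<inter> B = {}" using bet2 by blast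
    have "\<And>c. (\<Prod>B\<in>P. \<Prod>i\<in>B. g i (c i)) = (\<Prod>i<n. g i (c i))"
    proof -
      fix c
      have "(\<Prod>i\<in>\<Union>P. g i (c i)) = ((\<lambda>f. prod f) \<circ> (\<lambda>f. prod f)) (\<lambda>i. g i (c i)) P"
        using finB D by (intro prod.Union_disjoint) auto
      then show "(\<Prod>B\<in>P. \<Prod>i\<in>B. g i (c i)) = (\<Prod>i<n. g i (c i))" using U by (simp add: comp_def)
    qed
    then show ?thesis by simp
  qed
  finally show ?thesis by simp
qed

end

lemma sum_tbasis: "finite A \<Longrightarrow> u \<in> A \<Longrightarrow> (\<Sum>v\<in>A. tbasis u v * f v) = (f u :: int)"
proof -
  assume A: "finite A" "u \<in> A"
  have "(\<Sum>v\<in>A. tbasis u v * f v) = (\<Sum>v\<in>A. if v = u then f v else 0)"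
    by (intro sum.cong refl) (simp add: tbasis_def)
  then show ?thesis using A by (simp add: sum.delta')
qed

context FR begin

lemma tbasis_fixed_eq: "\<tau> permutes {..<n} \<Longrightarrow> a \<in> fixed_vecs R n \<tau> \<Longrightarrow> b \<in> fixed_vecs R n \<tau> \<Longrightarrow>
  (\<Prod>B\<in>orbits n \<tau>. cbasis (a (Min B)) (b (Min B))) = tbasis a b"
proof -
  assume p: "\<tau> permutes {..<n}" and a: "a \<in> fixed_vecs R n \<tau>" and b: "b \<in> fixed_vecs R n \<tau>"
  have "(\<Prod>B\<in>orbits n \<tau>. cbasis (a (Min B)) (b (Min B))) = (\<Prod>B\<in>orbits n \<tau>. (if b (Min B) = a (Min B) then 1 else 0))"
    unfolding cbasis_def ..
  also have "\<dots> = (if b = a then 1 else 0)" by (rule prod_delta_orbits[OF p b a])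
  finally show ?thesis unfolding tbasis_def .
qed

lemma deconf_ex:
  assumes p: "\<tau> permutes {..<n}" and a: "a \<in> fixed_vecs R n \<tau>"
  shows "is_deconf R n \<tau> a (tbasis (\<lambda>k. if k < n \<and> k = Min (orb \<tau> k) then a k else one R))"
proof -
  define u where "u = (\<lambda>k. if k < n \<and> k = Min (orb \<tau> k) then a k else one R)"
  have av: "a \<in> valid R n" using a by (rule fixed_valid)
  have uv: "u \<in> valid R n" using av oneI unfolding u_def valid_def by auto
  have CPu: "CP R B (\<lambda>k. cbasis (u k)) = cbasis (a (Min B))" if B: "B \<in> orbits n \<tau>" for B
  proof -
    have m: "Min B \<in> B" "Min B < n" "orb \<tau> (Min B) = B" "finite B" "B \<subseteq> {..<n}"
      using orbit_Min[OF p B] by auto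
    have BB: "B = insert (Min B) (B - {Min B})" using m by auto
    have "CP R B (\<lambda>k. cbasis (u k)) = cmult R (cbasis (u (Min B))) (CP R (B - {Min B}) (\<lambda>k. cbasis (u k)))"
      using CP_insert[of "B - {Min B}" "Min B" "\<lambda>k. cbasis (u k)"] m BB by simp
    also have "CP R (B - {Min B}) (\<lambda>k. cbasis (u k)) = CP R (B - {Min B}) (\<lambda>_. cunit R)"
    proof (rule CP_cong)
      show "finite (B - {Min B})" using m by simp
      fix k assume k: "k \<in> B - {Min B}"
      have "k < n" using k m by auto
      moreover have "orb \<tau> k = B" using orbit_of[OF p B] k by simp
      ultimately show "cbasis (u k) = cunit R" using k unfolding u_def cunit_cbasis by auto
    qed
    also have "\<dots> = cunit R" using m by (intro CP_unit) simp
    also have "u (Min B) = a (Min B)" using m unfolding u_def by simp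
    also have "cmult R (cbasis (a (Min B))) (cunit R) = cbasis (a (Min B))"
      using cmult_unit_r[OF cbasis_inC] valid_irr[OF av m(2)] by simp
    finally show ?thesis .
  qed
  have conf: "conf R n \<tau> (tbasis u) = tbasis a"
  proof (rule ext)
    fix b
    show "conf R n \<tau> (tbasis u) b = tbasis a b"
    proof (cases "b \<in> fixed_vecs R n \<tau>")
      case False
      then have "b \<noteq> a" using a by auto
      then show ?thesis using False conf_out by (simp add: tbasis_def)
    next
      case True
      have "conf R n \<tau> (tbasis u) b = (\<Sum>v\<in>valid R n. tbasis u v * (\<Prod>B\<in>orbits n \<tau>. CP R B (\<lambda>k. cbasis (v k)) (b (Min B))))"
        using conf_CP[OF p True] .
      also have "\<dots> = (\<Prod>B\<in>orbits n \<tau>. CP R B (\<lambda>k. cbasis (u k)) (b (Min B)))"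
        by (rule sum_tbasis[OF valid_fin uv])
      also have "\<dots> = (\<Prod>B\<in>orbits n \<tau>. cbasis (a (Min B)) (b (Min B)))"
        using CPu by (intro prod.cong refl) simp
      also have "\<dots> = tbasis a b" by (rule tbasis_fixed_eq[OF p a True])
      finally show ?thesis .
    qed
  qed
  have "telem R n (tbasis u)" unfolding telem_def tbasis_def using uv by auto
  moreover have "\<forall>v. 0 \<le> tbasis u v" unfolding tbasis_def by simp
  moreover have "act R n (tbasis u) (bare R \<tau>) = (\<tau>, tbasis a)" using act_bare[OF p] conf by simp
  ultimately show ?thesis unfolding is_deconf_def u_def by blast
qed

lemma prod_ge1_le1: "finite P \<Longrightarrow> (\<forall>B\<in>P. (1::int) \<le> f B) \<Longrightarrow> (\<Prod>B\<in>P. f B) \<le> 1 \<Longrightarrow> B0 \<in> P \<Longrightarrow> f B0 = 1"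
proof -
  assume fin: "finite P" and ge: "\<forall>B\<in>P. (1::int) \<le> f B" and le: "(\<Prod>B\<in>P. f B) \<le> 1" and B0: "B0 \<in> P"
  have "(\<Prod>B\<in>P. f B) = f B0 * (\<Prod>B\<in>P - {B0}. f B)" using fin B0 by (rule prod.remove)
  moreover have "1 \<le> (\<Prod>B\<in>P - {B0}. f B)" using ge by (intro prod_ge_1) auto
  moreover have "1 \<le> f B0" using ge B0 by blast
  ultimately have "f B0 \<le> (\<Prod>B\<in>P. f B)"
    by (metis mult_le_cancel_left1 order.trans less_le_not_le linorder_not_less zero_less_one)
  then show ?thesis using le \<open>1 \<le> f B0\<close> by simp
qed

lemma deconf_char:
  assumes p: "\<tau> permutes {..<n}" and dc: "is_deconf R n \<tau> (e1 R) d"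
  shows "(\<forall>v. d v \<noteq> 0 \<longrightarrow> v \<in> valid R n \<and> (\<forall>B\<in>orbits n \<tau>. CP R B (\<lambda>k. cbasis (v k)) = cunit R))
         \<and> (\<Sum>v\<in>valid R n. d v) = 1"
proof -
  have tel: "telem R n d" and nn: "\<And>v. 0 \<le> d v" and cf: "conf R n \<tau> d = tbasis (e1 R)"
    using dc act_bare[OF p] unfolding is_deconf_def by auto
  define Q where "Q v b = (\<Prod>B\<in>orbits n \<tau>. CP R B (\<lambda>k. cbasis (v k)) (b (Min B)))" for v b
  have sumQ: "(\<Sum>v\<in>valid R n. d v * Q v b) = tbasis (e1 R) b" if b: "b \<in> fixed_vecs R n \<tau>" for b
  proof -
    have "conf R n \<tau> d b = (\<Sum>v\<in>valid R n. d v * Q v b)" unfolding Q_def by (rule conf_CP[OF p b])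
    then show ?thesis using cf by simp
  qed
  have Bsub: "\<And>B. B \<in> orbits n \<tau> \<Longrightarrow> finite B \<and> B \<subseteq> {..<n}" using orbit_Min[OF p] by blast
  have CPnn: "\<And>v B y. v \<in> valid R n \<Longrightarrow> B \<in> orbits n \<tau> \<Longrightarrow> 0 \<le> CP R B (\<lambda>k. cbasis (v k)) y"
    using Bsub by (intro CP_nn) (auto simp: cbasis_def)
  have Qnn: "\<And>v b. v \<in> valid R n \<Longrightarrow> 0 \<le> Q v b"
    unfolding Q_def using CPnn by (intro prod_nonneg) auto
  have good: "v \<in> valid R n \<and> (\<forall>B\<in>orbits n \<tau>. CP R B (\<lambda>k. cbasis (v k)) = cunit R)" if dv: "d v \<noteq> 0" for v
  proof -
    have vv: "v \<in> valid R n" using tel dv unfolding telem_def by blast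
    have dv1: "1 \<le> d v" using nn[of v] dv by simp
    have le: "d v * Q v b \<le> tbasis (e1 R) b" if b: "b \<in> fixed_vecs R n \<tau>" for b
    proof -
      have "d v * Q v b \<le> (\<Sum>v\<in>valid R n. d v * Q v b)"
        using valid_fin vv nn Qnn by (intro member_le_sum) auto
      then show ?thesis using sumQ[OF b] by simp
    qed
    have posex: "\<And>B. B \<in> orbits n \<tau> \<Longrightarrow> \<exists>y\<in>irr R. 0 < CP R B (\<lambda>k. cbasis (v k)) y"
    proof -
      fix B assume B: "B \<in> orbits n \<tau>"
      show "\<exists>y\<in>irr R. 0 < CP R B (\<lambda>k. cbasis (v k)) y"
        using Bsub[OF B] vv by (intro CP_pos) (auto simp: valid_def)
    qed
    define yv where "yv B = (SOME y. y \<in> irr R \<and> 0 < CP R B (\<lambda>k. cbasis (v k)) y)" for B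
    have yv: "yv B \<in> irr R \<and> 0 < CP R B (\<lambda>k. cbasis (v k)) (yv B)" if B: "B \<in> orbits n \<tau>" for B
      unfolding yv_def by (rule someI_ex) (use posex[OF B] in blast)
    have only1: "y0 = one R" if B0: "B0 \<in> orbits n \<tau>" and y0: "y0 \<in> irr R" "0 < CP R B0 (\<lambda>k. cbasis (v k)) y0"
      for B0 y0
    proof -
      define b where "b k = (if k < n then (if orb \<tau> k = B0 then y0 else yv (orb \<tau> k)) else one R)" for k
      have bMin: "b (Min B) = (if B = B0 then y0 else yv B)" if B: "B \<in> orbits n \<tau>" for B
        using orbit_Min[OF p B] unfolding b_def by simp
      have bval: "b \<in> valid R n"
      proof -
        have "b k \<in> irr R" if k: "k < n" for k
          using y0(1) yv[OF orb_in_orbits[OF k]] k unfolding b_def by simp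
        moreover have "b k = one R" if k: "\<not> k < n" for k using k unfolding b_def by simp
        ultimately show ?thesis unfolding valid_def by auto
      qed
      have bfix: "b \<in> fixed_vecs R n \<tau>"
      proof -
        have "\<And>k. k < n \<Longrightarrow> b (\<tau> k) = b k"
        proof -
          fix k assume k: "k < n"
          have "\<tau> k \<in> orb \<tau> k" by (rule orb_step[OF orb_self])
          then have "orb \<tau> (\<tau> k) = orb \<tau> k" "\<tau> k < n" using orb_same[OF p] orb_bound[OF p k] by auto
          then show "b (\<tau> k) = b k" unfolding b_def using k by simp
        qed
        then show ?thesis using bval unfolding fixed_vecs_def by simp
      qed
      have "0 < Q v b" unfolding Q_def
      proof (rule prod_pos)
        fix B assume B: "B \<in> orbits n \<tau>"
        show "0 < CP R B (\<lambda>k. cbasis (v k)) (b (Min B))"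
          using bMin[OF B] yv[OF B] y0 by (cases "B = B0") auto
      qed
      then have "0 < d v * Q v b" using dv1 by simp
      then have "0 < tbasis (e1 R) b" using le[OF bfix] by linarith
      then have "b = e1 R" unfolding tbasis_def by (simp split: if_splits)
      then have "b (Min B0) = one R" unfolding e1_def by simp
      then show ?thesis using bMin[OF B0] by simp
    qed
    have supp: "CP R B (\<lambda>k. cbasis (v k)) y = 0" if B: "B \<in> orbits n \<tau>" and y: "y \<noteq> one R" for B y
    proof (cases "y \<in> irr R")
      case True
      have "\<not> 0 < CP R B (\<lambda>k. cbasis (v k)) y" using only1[OF B True] y by blast
      then show ?thesis using CPnn[OF vv B, of y] by simp
    next
      case False
      then show ?thesis using CP_inC Bsub[OF B] unfolding inC_def by blast
    qed
    have pos1: "1 \<le> CP R B (\<lambda>k. cbasis (v k)) (one R)" if B: "B \<in> orbits n \<tau>" for B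
    proof -
      obtain y where "y \<in> irr R" "0 < CP R B (\<lambda>k. cbasis (v k)) y" using posex[OF B] by blast
      then show ?thesis using only1[OF B] by fastforce
    qed
    have Qe1: "Q v (e1 R) = (\<Prod>B\<in>orbits n \<tau>. CP R B (\<lambda>k. cbasis (v k)) (one R))"
      unfolding Q_def e1_def ..
    have "Q v (e1 R) \<le> 1"
    proof -
      have "d v * Q v (e1 R) \<le> 1" using le[OF e1_fixed] unfolding tbasis_def by simp
      moreover have "0 \<le> Q v (e1 R)" using Qnn[OF vv] .
      moreover have "1 * Q v (e1 R) \<le> d v * Q v (e1 R)" by (rule mult_right_mono[OF dv1 Qnn[OF vv]])
      ultimately show ?thesis by linarith
    qed
    then have one1: "CP R B (\<lambda>k. cbasis (v k)) (one R) = 1" if B: "B \<in> orbits n \<tau>" for B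
      using prod_ge1_le1[where f = "\<lambda>B. CP R B (\<lambda>k. cbasis (v k)) (one R)" and P = "orbits n \<tau>", OF orbits_fin] pos1 B Qe1 by simp
    have "\<forall>B\<in>orbits n \<tau>. CP R B (\<lambda>k. cbasis (v k)) = cunit R"
    proof
      fix B assume B: "B \<in> orbits n \<tau>"
      show "CP R B (\<lambda>k. cbasis (v k)) = cunit R"
      proof (rule ext)
        fix y show "CP R B (\<lambda>k. cbasis (v k)) y = cunit R y"
          using one1[OF B] supp[OF B] unfolding cunit_def by (cases "y = one R") auto
      qed
    qed
    then show ?thesis using vv by blast
  qed
  have "(\<Sum>v\<in>valid R n. d v) = (\<Sum>v\<in>valid R n. d v * Q v (e1 R))"
  proof (rule sum.cong[OF refl])
    fix v assume v: "v \<in> valid R n"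
    show "d v = d v * Q v (e1 R)"
    proof (cases "d v = 0")
      case True then show ?thesis by simp
    next
      case False
      then have "\<forall>B\<in>orbits n \<tau>. CP R B (\<lambda>k. cbasis (v k)) = cunit R" using good by blast
      then have "Q v (e1 R) = 1" unfolding Q_def e1_def cunit_def by simp
      then show ?thesis by simp
    qed
  qed
  also have "\<dots> = 1" using sumQ[OF e1_fixed] unfolding tbasis_def by simp
  finally show ?thesis using good by blast
qed

end

lemma sum3_swap: "(\<Sum>c\<in>C. (\<Sum>v\<in>V. \<Sum>w\<in>W. f v w * X v w c) * Y c) =
   (\<Sum>v\<in>V. \<Sum>w\<in>W. f v w * (\<Sum>c\<in>C. X v w c * Y c :: int))"
proof -
  have "(\<Sum>c\<in>C. (\<Sum>v\<in>V. \<Sum>w\<in>W. f v w * X v w c) * Y c) = (\<Sum>c\<in>C. \<Sum>v\<in>V. \<Sum>w\<in>W. f v w * X v w c * Y c)"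
    by (simp add: sum_distrib_right)
  also have "\<dots> = (\<Sum>v\<in>V. \<Sum>c\<in>C. \<Sum>w\<in>W. f v w * X v w c * Y c)" by (rule sum.swap)
  also have "\<dots> = (\<Sum>v\<in>V. \<Sum>w\<in>W. \<Sum>c\<in>C. f v w * X v w c * Y c)" by (rule sum.cong[OF refl], rule sum.swap)
  also have "\<dots> = (\<Sum>v\<in>V. \<Sum>w\<in>W. f v w * (\<Sum>c\<in>C. X v w c * Y c))" by (simp add: sum_distrib_left mult.assoc)
  finally show ?thesis .
qed

lemma sum_prod3: "(\<Sum>v\<in>A. \<Sum>w\<in>B. f v * g w * t) = sum f A * sum g B * (t::int)"
proof -
  have "sum f A * sum g B * t = (\<Sum>v\<in>A. \<Sum>w\<in>B. f v * g w) * t" by (simp only: sum_product)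
  also have "\<dots> = (\<Sum>v\<in>A. (\<Sum>w\<in>B. f v * g w) * t)" by (rule sum_distrib_right)
  also have "\<dots> = (\<Sum>v\<in>A. \<Sum>w\<in>B. f v * g w * t)" by (simp only: sum_distrib_right)
  finally show ?thesis by simp
qed

context FR begin

lemma block_unit:
  assumes p: "\<rho> permutes {..<n}" and fin: "finite Bp" and sub: "Bp \<subseteq> {..<n}"
    and cl: "\<forall>x\<in>Bp. \<rho> x \<in> Bp" and units: "\<forall>B\<in>orbits n \<rho>. CP R B (\<lambda>k. cbasis (v k)) = cunit R"
  shows "CP R Bp (\<lambda>k. cbasis (v k)) = cunit R"
proof -
  let ?F = "orb \<rho> ` Bp"
  have orbsub: "orb \<rho> x \<subseteq> Bp" if x: "x \<in> Bp" for x
  proof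
    fix y assume "y \<in> orb \<rho> x"
    then obtain j where y: "y = (\<rho> ^^ j) x" unfolding orb_def by blast
    have "(\<rho> ^^ j) x \<in> Bp" by (induction j) (use x cl in auto)
    then show "y \<in> Bp" using y by simp
  qed
  have U: "\<Union>?F = Bp" using orbsub orb_self by blast
  have f1: "finite ?F" using fin by simp
  have f2: "\<forall>A\<in>?F. finite A" using orb_finite[OF p] sub by blast
  have D: "\<forall>A\<in>?F. \<forall>B\<in>?F. A \<noteq> B \<longrightarrow> A \<inter> B = {}"
  proof (intro ballI impI)
    fix A B assume A: "A \<in> ?F" and B: "B \<in> ?F" and ne: "A \<noteq> B"
    obtain x y where x: "A = orb \<rho> x" and y: "B = orb \<rho> y" using A B by blast
    show "A \<inter> B = {}"
    proof (rule ccontr)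
      assume "A \<inter> B \<noteq> {}"
      then obtain z where zx: "z \<in> orb \<rho> x" and zy: "z \<in> orb \<rho> y" using x y by blast
      have "orb \<rho> z = orb \<rho> x" by (rule orb_same[OF p zx])
      moreover have "orb \<rho> z = orb \<rho> y" by (rule orb_same[OF p zy])
      ultimately have "orb \<rho> x = orb \<rho> y" by simp
      then show False using ne x y by simp
    qed
  qed
  have u: "\<forall>A\<in>?F. CP R A (\<lambda>k. cbasis (v k)) = cunit R"
  proof
    fix A assume "A \<in> ?F"
    then obtain x where x: "x \<in> Bp" "A = orb \<rho> x" by blast
    have "x < n" using sub x by auto
    then have "A \<in> orbits n \<rho>" using x orb_in_orbits by simp
    then show "CP R A (\<lambda>k. cbasis (v k)) = cunit R" using units by blast
  qed
  show ?thesis using CP_Union[OF f1 f2 D u] U by simp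
qed

lemma cmult_cbasis2: "a \<in> irr R \<Longrightarrow> b \<in> irr R \<Longrightarrow> cmult R (cbasis a) (cbasis b) y = N R a b y"
proof -
  assume a: "a \<in> irr R" and b: "b \<in> irr R"
  have "cmult R (cbasis a) (cbasis b) y = (\<Sum>e\<in>irr R. cbasis b e * N R a e y)" by (rule cmult_cbasis[OF a])
  also have "\<dots> = (\<Sum>e\<in>irr R. if e = b then N R a b y else 0)"
    by (intro sum.cong refl) (simp add: cbasis_def)
  also have "\<dots> = N R a b y" using b finI by simp
  finally show ?thesis .
qed

lemma conf_unit:
  assumes pr: "\<rho> permutes {..<n}" and ps: "\<sigma> permutes {..<n}"
    and H2: "\<forall>k<n. \<forall>x\<in>orb (\<rho> \<circ> \<sigma>) k. \<rho> x \<in> orb (\<rho> \<circ> \<sigma>) k \<and> \<sigma> x \<in> orb (\<rho> \<circ> \<sigma>) k"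
    and d1: "is_deconf R n \<rho> (e1 R) d1" and d2: "is_deconf R n \<sigma> (e1 R) d2"
  shows "conf R n (\<rho> \<circ> \<sigma>) (tmult R n d1 d2) = tunit R"
proof (rule ext)
  fix b
  let ?\<pi> = "\<rho> \<circ> \<sigma>"
  have pp: "?\<pi> permutes {..<n}" by (rule permutes_compose[OF ps pr])
  obtain D1: "\<forall>v. d1 v \<noteq> 0 \<longrightarrow> v \<in> valid R n \<and> (\<forall>B\<in>orbits n \<rho>. CP R B (\<lambda>k. cbasis (v k)) = cunit R)"
    and S1: "(\<Sum>v\<in>valid R n. d1 v) = 1" using deconf_char[OF pr d1] by blast
  obtain D2: "\<forall>v. d2 v \<noteq> 0 \<longrightarrow> v \<in> valid R n \<and> (\<forall>B\<in>orbits n \<sigma>. CP R B (\<lambda>k. cbasis (v k)) = cunit R)"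
    and S2: "(\<Sum>v\<in>valid R n. d2 v) = 1" using deconf_char[OF ps d2] by blast
  show "conf R n ?\<pi> (tmult R n d1 d2) b = tunit R b"
  proof (cases "b \<in> fixed_vecs R n ?\<pi>")
    case False
    then have "b \<noteq> e1 R" using e1_fixed by auto
    then show ?thesis using False conf_out unfolding tunit_e1 tbasis_def by simp
  next
    case bf: True
    define X where "X v w c = (\<Prod>i<n. N R (v i) (w i) (c i))" for v w c
    define Y where "Y c = (\<Prod>B\<in>orbits n ?\<pi>. CP R B (\<lambda>k. cbasis (c k)) (b (Min B)))" for c
    have "conf R n ?\<pi> (tmult R n d1 d2) b = (\<Sum>c\<in>valid R n. tmult R n d1 d2 c * Y c)"
      unfolding Y_def by (rule conf_CP[OF pp bf])
    also have "\<dots> = (\<Sum>c\<in>valid R n. (\<Sum>v\<in>valid R n. \<Sum>w\<in>valid R n. d1 v * d2 w * X v w c) * Y c)"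
      unfolding tmult_def X_def by (intro sum.cong refl) (simp add: mult.assoc)
    also have "\<dots> = (\<Sum>v\<in>valid R n. \<Sum>w\<in>valid R n. d1 v * d2 w * (\<Sum>c\<in>valid R n. X v w c * Y c))"
      by (rule sum3_swap)
    also have "\<dots> = (\<Sum>v\<in>valid R n. \<Sum>w\<in>valid R n. d1 v * d2 w * tunit R b)"
    proof (intro sum.cong refl)
      fix v w assume v: "v \<in> valid R n" and w: "w \<in> valid R n"
      show "d1 v * d2 w * (\<Sum>c\<in>valid R n. X v w c * Y c) = d1 v * d2 w * tunit R b"
      proof (cases "d1 v = 0 \<or> d2 w = 0")
        case True then show ?thesis by auto
      next
        case False
        then have u1: "\<forall>B\<in>orbits n \<rho>. CP R B (\<lambda>k. cbasis (v k)) = cunit R"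
          and u2: "\<forall>B\<in>orbits n \<sigma>. CP R B (\<lambda>k. cbasis (w k)) = cunit R" using D1 D2 by auto
        define g where "g i = cmult R (cbasis (v i)) (cbasis (w i))" for i
        have Xg: "X v w c = (\<Prod>i<n. g i (c i))" for c
          unfolding X_def g_def using cmult_cbasis2 valid_irr[OF v] valid_irr[OF w]
          by (intro prod.cong refl) simp
        have "(\<Sum>c\<in>valid R n. X v w c * Y c) = (\<Sum>c\<in>valid R n. (\<Prod>i<n. g i (c i)) * Y c)"
          unfolding Xg ..
        also have "\<dots> = (\<Prod>B\<in>orbits n ?\<pi>. CP R B g (b (Min B)))"
          unfolding Y_def
        proof (rule GL)
          show "finite (orbits n ?\<pi>)" by (rule orbits_fin)
          show "\<forall>B\<in>orbits n ?\<pi>. B \<subseteq> {..<n}" using orbit_Min[OF pp] by blast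
          show "\<forall>i<n. orb ?\<pi> i \<in> orbits n ?\<pi> \<and> i \<in> orb ?\<pi> i" using orb_in_orbits orb_self by blast
          show "\<forall>B\<in>orbits n ?\<pi>. \<forall>i\<in>B. orb ?\<pi> i = B" using orbit_of[OF pp] by blast
          show "\<forall>i<n. inC R (g i)" unfolding g_def using cmult_inC by blast
        qed
        also have "\<dots> = (\<Prod>B\<in>orbits n ?\<pi>. cunit R (b (Min B)))"
        proof (rule prod.cong[OF refl])
          fix B assume B: "B \<in> orbits n ?\<pi>"
          have m: "finite B" "B \<subseteq> {..<n}" using orbit_Min[OF pp B] by auto
          obtain k where k: "k < n" "B = orb ?\<pi> k" using orbitsE[OF B] by blast
          have c1: "\<forall>x\<in>B. \<rho> x \<in> B" and c2: "\<forall>x\<in>B. \<sigma> x \<in> B" using H2 k by auto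
          have "CP R B g = cmult R (CP R B (\<lambda>k. cbasis (v k))) (CP R B (\<lambda>k. cbasis (w k)))"
            unfolding g_def by (rule CP_mult[OF m(1)])
          also have "\<dots> = cmult R (cunit R) (cunit R)"
            using block_unit[OF pr m c1 u1] block_unit[OF ps m c2 u2] by simp
          also have "\<dots> = cunit R" by (rule cmult_unit[OF cunit_inC])
          finally show "CP R B g (b (Min B)) = cunit R (b (Min B))" by simp
        qed
        also have "\<dots> = tunit R b"
          unfolding cunit_cbasis tunit_e1
          using tbasis_fixed_eq[OF pp e1_fixed bf] unfolding e1_def by simp
        finally show ?thesis by simp
      qed
    qed
    also have "\<dots> = (\<Sum>v\<in>valid R n. d1 v) * (\<Sum>w\<in>valid R n. d2 w) * tunit R b"
      by (rule sum_prod3)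
    also have "\<dots> = tunit R b" using S1 S2 by simp
    finally show ?thesis .
  qed
qed

end

context FR begin

lemma tmult_unit: "telem R n x \<Longrightarrow> tmult R n x (tunit R) = x"
proof (rule ext)
  fix c assume tx: "telem R n x"
  show "tmult R n x (tunit R) c = x c"
  proof (cases "c \<in> valid R n")
    case False then show ?thesis using tx unfolding tmult_def telem_def by simp
  next
    case cv: True
    have "tmult R n x (tunit R) c = (\<Sum>a\<in>valid R n. \<Sum>b\<in>valid R n. x a * tbasis (e1 R) b * (\<Prod>i<n. N R (a i) (b i) (c i)))"
      using cv unfolding tmult_def tunit_e1 by simp
    also have "\<dots> = (\<Sum>a\<in>valid R n. x a * (\<Prod>i<n. N R (a i) (one R) (c i)))"
    proof (rule sum.cong[OF refl])
      fix a
      have "(\<Sum>b\<in>valid R n. x a * tbasis (e1 R) b * (\<Prod>i<n. N R (a i) (b i) (c i)))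
          = (\<Sum>b\<in>valid R n. if b = e1 R then x a * (\<Prod>i<n. N R (a i) (one R) (c i)) else 0)"
        by (intro sum.cong refl) (simp add: tbasis_def e1_def)
      also have "\<dots> = x a * (\<Prod>i<n. N R (a i) (one R) (c i))" using valid_fin e1_valid by simp
      finally show "(\<Sum>b\<in>valid R n. x a * tbasis (e1 R) b * (\<Prod>i<n. N R (a i) (b i) (c i))) =
          x a * (\<Prod>i<n. N R (a i) (one R) (c i))" .
    qed
    also have "\<dots> = (\<Sum>a\<in>valid R n. if a = c then x a else 0)"
    proof (rule sum.cong[OF refl])
      fix a assume av: "a \<in> valid R n"
      have "(\<Prod>i<n. N R (a i) (one R) (c i)) = (\<Prod>i<n. if a i = c i then 1 else 0)"
        using N_one_r valid_irr[OF av] valid_irr[OF cv] by (intro prod.cong refl) simp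
      also have "\<dots> = (if a = c then 1 else 0)"
      proof (cases "a = c")
        case True then show ?thesis by simp
      next
        case False
        then obtain i where i: "a i \<noteq> c i" by auto
        have "i < n"
        proof (rule ccontr)
          assume "\<not> i < n"
          then have "a i = one R" "c i = one R" using av cv unfolding valid_def by auto
          then show False using i by simp
        qed
        then have "(\<Prod>i<n. if a i = c i then 1 else 0 :: int) = 0" using i by (intro prod_zero) auto
        then show ?thesis using False by simp
      qed
      finally show "x a * (\<Prod>i<n. N R (a i) (one R) (c i)) = (if a = c then x a else 0)" by simp
    qed
    also have "\<dots> = x c" using cv valid_fin by (simp add: sum.delta')
    finally show ?thesis .
  qed
qed

lemma tmult_telem: "telem R n (tmult R n x y)"
  unfolding telem_def tmult_def by simp

lemma fbo_fst: "fus_basis_out R n \<rho> a \<sigma> b z \<Longrightarrow> fst z = \<rho> \<circ> \<sigma>"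
  unfolding fus_basis_out_def act_def bare_def by auto

lemma fbo_unique:
  assumes pr: "\<rho> permutes {..<n}" and ps: "\<sigma> permutes {..<n}"
    and H1: "\<forall>cs. is_cycle_decomp n \<rho> cs \<longrightarrow> Fcomp R n (transp_list cs) \<sigma> = tunit R"
    and H2: "\<forall>k<n. \<forall>x\<in>orb (\<rho> \<circ> \<sigma>) k. \<rho> x \<in> orb (\<rho> \<circ> \<sigma>) k \<and> \<sigma> x \<in> orb (\<rho> \<circ> \<sigma>) k"
    and fb: "fus_basis_out R n \<rho> (e1 R) \<sigma> (e1 R) z"
  shows "z = bare R (\<rho> \<circ> \<sigma>)"
proof -
  have pp: "(\<rho> \<circ> \<sigma>) permutes {..<n}" by (rule permutes_compose[OF ps pr])
  obtain cs d1 d2 where cs: "is_cycle_decomp n \<rho> cs" and d1: "is_deconf R n \<rho> (e1 R) d1"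
    and d2: "is_deconf R n \<sigma> (e1 R) d2"
    and z: "z = act R n (tmult R n (tmult R n d1 d2) (Fcomp R n (transp_list cs) \<sigma>)) (bare R (\<rho> \<circ> \<sigma>))"
    using fb unfolding fus_basis_out_def by blast
  have "z = act R n (tmult R n d1 d2) (bare R (\<rho> \<circ> \<sigma>))"
    using z H1 cs tmult_unit[OF tmult_telem] by simp
  also have "\<dots> = (\<rho> \<circ> \<sigma>, conf R n (\<rho> \<circ> \<sigma>) (tmult R n d1 d2))" by (rule act_bare[OF pp])
  also have "\<dots> = (\<rho> \<circ> \<sigma>, tunit R)" using conf_unit[OF pr ps H2 d1 d2] by simp
  finally show ?thesis unfolding bare_def runit_def .
qed

lemma fbo_exists:
  assumes pr: "\<rho> permutes {..<n}" and ps: "\<sigma> permutes {..<n}"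
    and CD: "\<exists>cs. is_cycle_decomp n \<rho> cs"
    and a: "a \<in> fixed_vecs R n \<rho>" and b: "b \<in> fixed_vecs R n \<sigma>"
  shows "\<exists>z. fus_basis_out R n \<rho> a \<sigma> b z"
  using CD deconf_ex[OF pr a] deconf_ex[OF ps b] unfolding fus_basis_out_def by blast

lemma sum_sum_e1: "(\<Sum>a\<in>fixed_vecs R n \<rho>. \<Sum>b\<in>fixed_vecs R n \<sigma>. tunit R a * tunit R b * f a b) = (f (e1 R) (e1 R) :: int)"
proof -
  have "(\<Sum>a\<in>fixed_vecs R n \<rho>. \<Sum>b\<in>fixed_vecs R n \<sigma>. tunit R a * tunit R b * f a b)
      = (\<Sum>a\<in>fixed_vecs R n \<rho>. if a = e1 R then f (e1 R) (e1 R) else 0)"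
  proof (rule sum.cong[OF refl])
    fix a
    have "(\<Sum>b\<in>fixed_vecs R n \<sigma>. tunit R a * tunit R b * f a b) = (\<Sum>b\<in>fixed_vecs R n \<sigma>. if b = e1 R then tunit R a * f a (e1 R) else 0)"
      by (intro sum.cong refl) (simp add: tunit_e1 tbasis_def)
    also have "\<dots> = tunit R a * f a (e1 R)" using fixed_fin e1_fixed by simp
    also have "\<dots> = (if a = e1 R then f (e1 R) (e1 R) else 0)" by (simp add: tunit_e1 tbasis_def)
    finally show "(\<Sum>b\<in>fixed_vecs R n \<sigma>. tunit R a * tunit R b * f a b) = (if a = e1 R then f (e1 R) (e1 R) else 0)" .
  qed
  also have "\<dots> = f (e1 R) (e1 R)" using fixed_fin e1_fixed by simp
  finally show ?thesis .
qed

lemma main_fus: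
  assumes pr: "\<rho> permutes {..<n}" and ps: "\<sigma> permutes {..<n}"
    and H1: "\<forall>cs. is_cycle_decomp n \<rho> cs \<longrightarrow> Fcomp R n (transp_list cs) \<sigma> = tunit R"
    and H2: "\<forall>k<n. \<forall>x\<in>orb (\<rho> \<circ> \<sigma>) k. \<rho> x \<in> orb (\<rho> \<circ> \<sigma>) k \<and> \<sigma> x \<in> orb (\<rho> \<circ> \<sigma>) k"
    and CD: "\<exists>cs. is_cycle_decomp n \<rho> cs"
  shows "{z. fus_rel R n (bare R \<rho>) (bare R \<sigma>) z} = {bare R (\<rho> \<circ> \<sigma>)}"
proof (intro set_eqI iffI)
  fix z assume "z \<in> {z. fus_rel R n (bare R \<rho>) (bare R \<sigma>) z}"
  then obtain ch where ch: "\<forall>a\<in>fixed_vecs R n \<rho>. \<forall>b\<in>fixed_vecs R n \<sigma>. fus_basis_out R n \<rho> a \<sigma> b (\<rho> \<circ> \<sigma>, ch a b)"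
    and z: "z = (\<rho> \<circ> \<sigma>, \<lambda>c. \<Sum>a\<in>fixed_vecs R n \<rho>. \<Sum>b\<in>fixed_vecs R n \<sigma>. tunit R a * tunit R b * ch a b c)"
    unfolding fus_rel_def bare_def runit_def by auto
  have "z = (\<rho> \<circ> \<sigma>, ch (e1 R) (e1 R))" using z sum_sum_e1 by simp
  moreover have "(\<rho> \<circ> \<sigma>, ch (e1 R) (e1 R)) = bare R (\<rho> \<circ> \<sigma>)"
    using fbo_unique[OF pr ps H1 H2] ch e1_fixed by blast
  ultimately show "z \<in> {bare R (\<rho> \<circ> \<sigma>)}" by simp
next
  fix z assume "z \<in> {bare R (\<rho> \<circ> \<sigma>)}"
  then have zb: "z = bare R (\<rho> \<circ> \<sigma>)" by simp
  define ch where "ch a b = snd (SOME z. fus_basis_out R n \<rho> a \<sigma> b z)" for a b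
  have chp: "fus_basis_out R n \<rho> a \<sigma> b (\<rho> \<circ> \<sigma>, ch a b)"
    if a: "a \<in> fixed_vecs R n \<rho>" and b: "b \<in> fixed_vecs R n \<sigma>" for a b
  proof -
    let ?z = "SOME z. fus_basis_out R n \<rho> a \<sigma> b z"
    have "fus_basis_out R n \<rho> a \<sigma> b ?z" using fbo_exists[OF pr ps CD a b] by (rule someI_ex)
    moreover then have "fst ?z = \<rho> \<circ> \<sigma>" by (rule fbo_fst)
    ultimately show ?thesis unfolding ch_def by (metis prod.collapse)
  qed
  have "ch (e1 R) (e1 R) = tunit R"
    using fbo_unique[OF pr ps H1 H2 chp[OF e1_fixed e1_fixed]] unfolding bare_def runit_def by simp
  then have "bare R (\<rho> \<circ> \<sigma>) = (\<rho> \<circ> \<sigma>, \<lambda>c. \<Sum>a\<in>fixed_vecs R n \<rho>. \<Sum>b\<in>fixed_vecs R n \<sigma>. tunit R a * tunit R b * ch a b c)"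
    unfolding bare_def runit_def using sum_sum_e1 by simp
  then have "fus_rel R n (bare R \<rho>) (bare R \<sigma>) (bare R (\<rho> \<circ> \<sigma>))"
    unfolding fus_rel_def using chp by (auto simp: bare_def runit_def)
  then show "z \<in> {z. fus_rel R n (bare R \<rho>) (bare R \<sigma>) z}" using zb by simp
qed

end

fun gd :: "(nat \<Rightarrow> nat) \<Rightarrow> (nat \<times> nat) list \<Rightarrow> bool" where
  "gd \<sigma> [] = True"
| "gd \<sigma> ((i, j) # ts) = (i \<noteq> j \<and> (prod_transp ts \<sigma> i = i \<or> prod_transp ts \<sigma> j = j) \<and> gd \<sigma> ts)"

lemma prod_transp_Cons: "prod_transp ((a, b) # ts) \<sigma> = transpose a b \<circ> prod_transp ts \<sigma>"
  unfolding prod_transp_def by simp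

lemma prod_transp_inj: "inj \<sigma> \<Longrightarrow> inj (prod_transp ts \<sigma>)"
proof (induction ts)
  case Nil then show ?case by (simp add: prod_transp_def)
next
  case (Cons t ts)
  obtain a b where t: "t = (a, b)" by fastforce
  have "inj (transpose a b)" by (rule inj_transpose)
  then have "inj (transpose a b \<circ> prod_transp ts \<sigma>)" using Cons by (intro inj_compose) auto
  then show ?case using t by (simp only: prod_transp_Cons)
qed

lemma not_in_orb: "inj \<pi> \<Longrightarrow> i \<noteq> j \<Longrightarrow> \<pi> i = i \<or> \<pi> j = j \<Longrightarrow> j \<notin> orb \<pi> i"
proof
  assume inj: "inj \<pi>" and ne: "i \<noteq> j" and fx: "\<pi> i = i \<or> \<pi> j = j" and jo: "j \<in> orb \<pi> i"
  obtain m where m: "j = (\<pi> ^^ m) i" using jo unfolding orb_def by blast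
  show False
  proof (cases "\<pi> i = i")
    case True
    have "(\<pi> ^^ m) i = i" by (induction m) (simp_all add: True)
    then show False using m ne by simp
  next
    case False
    then have pj: "\<pi> j = j" using fx by simp
    have "(\<pi> ^^ m) j = j" by (induction m) (simp_all add: pj)
    then have "(\<pi> ^^ m) i = (\<pi> ^^ m) j" using m by simp
    moreover have "inj (\<pi> ^^ m)" using inj by (rule inj_fn)
    ultimately show False using ne by (simp add: inj_eq)
  qed
qed

lemma (in FR) Fcomp_gd: "inj \<sigma> \<Longrightarrow> gd \<sigma> ts \<Longrightarrow> Fcomp R n ts \<sigma> = tunit R"
proof (induction ts)
  case Nil then show ?case by simp
next
  case (Cons t ts)
  obtain i j where t: "t = (i, j)" by fastforce
  have g: "i \<noteq> j" "prod_transp ts \<sigma> i = i \<or> prod_transp ts \<sigma> j = j" "gd \<sigma> ts" using Cons.prems t by auto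
  have "j \<notin> orb (prod_transp ts \<sigma>) i" using not_in_orb[OF prod_transp_inj[OF Cons.prems(1)] g(1,2)] .
  then show ?case using Cons.IH[OF Cons.prems(1) g(3)] t by simp
qed

definition comps :: "(nat \<times> nat) list \<Rightarrow> nat set" where
  "comps ts = fst ` set ts \<union> snd ` set ts"

lemma prod_transp_out: "x \<notin> comps ts \<Longrightarrow> \<sigma> x = x \<Longrightarrow> prod_transp ts \<sigma> x = x"
proof (induction ts)
  case Nil then show ?case by (simp add: prod_transp_def)
next
  case (Cons t ts)
  obtain a b where t: "t = (a, b)" by fastforce
  have "x \<noteq> a" "x \<noteq> b" "x \<notin> comps ts" using Cons.prems t unfolding comps_def by auto
  then show ?case using Cons.IH Cons.prems(2) t by (simp add: prod_transp_Cons)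
qed

fun gd2 :: "(nat \<Rightarrow> nat) \<Rightarrow> (nat \<times> nat) list \<Rightarrow> bool" where
  "gd2 \<sigma> [] = True"
| "gd2 \<sigma> ((i, j) # ts) = (i \<noteq> j \<and> i \<notin> comps ts \<and> \<sigma> i = i \<and> gd2 \<sigma> ts)"

lemma gd2_gd: "gd2 \<sigma> ts \<Longrightarrow> gd \<sigma> ts"
proof (induction ts)
  case Nil then show ?case by simp
next
  case (Cons t ts)
  obtain a b where t: "t = (a, b)" by fastforce
  then show ?case using Cons prod_transp_out[of a ts \<sigma>] by auto
qed

lemma comps_append: "comps (xs @ ys) = comps xs \<union> comps ys"
  unfolding comps_def by auto

lemma gd2_append: "gd2 \<sigma> xs \<Longrightarrow> gd2 \<sigma> ys \<Longrightarrow> fst ` set xs \<inter> comps ys = {} \<Longrightarrow> gd2 \<sigma> (xs @ ys)"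
proof (induction xs)
  case Nil then show ?case by simp
next
  case (Cons t xs)
  obtain a b where t: "t = (a, b)" by fastforce
  then show ?case using Cons by (auto simp: comps_append)
qed

definition pairs :: "nat list \<Rightarrow> (nat \<times> nat) list" where
  "pairs c = map (\<lambda>j. (c ! j, c ! Suc j)) [0..<length c - 1]"

lemma transp_list_Cons: "transp_list (c # cs) = pairs c @ transp_list cs"
  unfolding transp_list_def pairs_def by simp

lemma transp_list_Nil: "transp_list [] = []"
  unfolding transp_list_def by simp

lemma pairs_Nil: "pairs [] = []" unfolding pairs_def by simp

lemma pairs_Cons: "c \<noteq> [] \<Longrightarrow> pairs (a # c) = (a, c ! 0) # pairs c"
proof -
  assume c: "c \<noteq> []"
  then obtain m where m: "length c = Suc m" by (cases c) auto
  have "[0..<length (a # c) - 1] = 0 # map Suc [0..<m]" using m by (simp add: upt_conv_Cons map_Suc_upt)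
  then have "pairs (a # c) = (a, c ! 0) # map (\<lambda>j. (c ! j, c ! Suc j)) [0..<m]"
    unfolding pairs_def by simp
  also have "map (\<lambda>j. (c ! j, c ! Suc j)) [0..<m] = pairs c" unfolding pairs_def using m by simp
  finally show ?thesis .
qed

lemma pairs_single: "pairs [a] = []" unfolding pairs_def by simp

lemma comps_pairs: "comps (pairs c) \<subseteq> set c"
proof
  fix x assume "x \<in> comps (pairs c)"
  then obtain j where j: "j < length c - 1" "x = c ! j \<or> x = c ! Suc j"
    unfolding comps_def pairs_def by auto
  then show "x \<in> set c" by auto
qed

lemma gd2_pairs: "distinct c \<Longrightarrow> (\<forall>x\<in>set c. \<sigma> x = x) \<Longrightarrow> gd2 \<sigma> (pairs c)"
proof (induction c)
  case Nil then show ?case by (simp add: pairs_Nil)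
next
  case (Cons a c)
  show ?case
  proof (cases "c = []")
    case True then show ?thesis by (simp add: pairs_single)
  next
    case False
    have "a \<noteq> c ! 0" using Cons.prems(1) False by (metis distinct.simps(2) nth_mem length_greater_0_conv)
    moreover have "a \<notin> comps (pairs c)" using comps_pairs Cons.prems(1) by auto
    moreover have "\<sigma> a = a" using Cons.prems(2) by simp
    moreover have "gd2 \<sigma> (pairs c)" using Cons by simp
    ultimately show ?thesis using pairs_Cons[OF False] by simp
  qed
qed

lemma gd2_transp_list: "distinct cs \<Longrightarrow> (\<forall>c\<in>set cs. distinct c \<and> (\<forall>x\<in>set c. \<sigma> x = x)) \<Longrightarrow>
   (\<forall>c1\<in>set cs. \<forall>c2\<in>set cs. c1 \<noteq> c2 \<longrightarrow> set c1 \<inter> set c2 = {}) \<Longrightarrow> gd2 \<sigma> (transp_list cs)"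
proof (induction cs)
  case Nil then show ?case by (simp add: transp_list_Nil)
next
  case (Cons c cs)
  have "gd2 \<sigma> (pairs c)" using Cons.prems(2) by (intro gd2_pairs) auto
  moreover have "gd2 \<sigma> (transp_list cs)" using Cons by simp
  moreover have "fst ` set (pairs c) \<inter> comps (transp_list cs) = {}"
  proof -
    have "fst ` set (pairs c) \<subseteq> set c" using comps_pairs unfolding comps_def by auto
    moreover have "comps (transp_list cs) \<subseteq> \<Union>(set ` set cs)"
    proof (induction cs)
      case Nil then show ?case by (simp add: transp_list_Nil comps_def)
    next
      case (Cons c' cs')
      then show ?case using comps_pairs[of c'] by (auto simp: transp_list_Cons comps_append)
    qed
    moreover have "set c \<inter> \<Union>(set ` set cs) = {}" using Cons.prems(1,3) by fastforce
    ultimately show ?thesis by blast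
  qed
  ultimately show ?case by (simp add: transp_list_Cons gd2_append)
qed

lemma (in FR) Fcomp_disjoint:
  assumes ps: "\<sigma> permutes {..<n}" and dj: "\<forall>k. \<rho> k = k \<or> \<sigma> k = k" and cs: "is_cycle_decomp n \<rho> cs"
  shows "Fcomp R n (transp_list cs) \<sigma> = tunit R"
proof -
  have "gd2 \<sigma> (transp_list cs)"
  proof (rule gd2_transp_list)
    show "distinct cs" using cs unfolding is_cycle_decomp_def by blast
    show "\<forall>c1\<in>set cs. \<forall>c2\<in>set cs. c1 \<noteq> c2 \<longrightarrow> set c1 \<inter> set c2 = {}"
      using cs unfolding is_cycle_decomp_def by blast
    show "\<forall>c\<in>set cs. distinct c \<and> (\<forall>x\<in>set c. \<sigma> x = x)"
    proof
      fix c assume c: "c \<in> set cs"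
      have "distinct c" using cs c unfolding is_cycle_decomp_def by blast
      moreover have "set c \<subseteq> {k. k < n \<and> \<rho> k \<noteq> k}" using cs c unfolding is_cycle_decomp_def by blast
      ultimately show "distinct c \<and> (\<forall>x\<in>set c. \<sigma> x = x)" using dj by blast
    qed
  qed
  then show ?thesis using Fcomp_gd[OF permutes_inj[OF ps] gd2_gd] by blast
qed

lemma H2_disj:
  assumes pr: "\<rho> permutes {..<n}" and ps: "\<sigma> permutes {..<n}" and dj: "\<forall>k. \<rho> k = k \<or> \<sigma> k = k"
  shows "\<forall>k<n. \<forall>x\<in>orb (\<rho> \<circ> \<sigma>) k. \<rho> x \<in> orb (\<rho> \<circ> \<sigma>) k \<and> \<sigma> x \<in> orb (\<rho> \<circ> \<sigma>) k"
proof (intro allI impI ballI conjI)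
  fix k x assume x: "x \<in> orb (\<rho> \<circ> \<sigma>) k"
  have st: "(\<rho> \<circ> \<sigma>) x \<in> orb (\<rho> \<circ> \<sigma>) k" using orb_step[OF x] .
  show "\<rho> x \<in> orb (\<rho> \<circ> \<sigma>) k"
  proof (cases "\<rho> x = x")
    case True then show ?thesis using x by simp
  next
    case False
    then have "\<sigma> x = x" using dj by blast
    then show ?thesis using st by simp
  qed
  show "\<sigma> x \<in> orb (\<rho> \<circ> \<sigma>) k"
  proof (cases "\<sigma> x = x")
    case True then show ?thesis using x by simp
  next
    case False
    have "\<rho> (\<sigma> x) = \<sigma> x"
    proof (rule ccontr)
      assume "\<rho> (\<sigma> x) \<noteq> \<sigma> x"
      then have "\<sigma> (\<sigma> x) = \<sigma> x" using dj by blast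
      then have "\<sigma> x = x" using permutes_inj[OF ps] by (simp add: inj_eq)
      then show False using False by simp
    qed
    then show ?thesis using st by simp
  qed
qed

lemma H2_transp:
  assumes pp: "\<pi> permutes {..<n}" and pi: "\<pi> i = i" and ij: "i \<noteq> j" and i: "i < n" and j: "j < n"
  shows "\<forall>k<n. \<forall>x\<in>orb (transpose i j \<circ> \<pi>) k. transpose i j x \<in> orb (transpose i j \<circ> \<pi>) k \<and> \<pi> x \<in> orb (transpose i j \<circ> \<pi>) k"
proof (intro allI impI ballI)
  fix k x assume k: "k < n" and x: "x \<in> orb (transpose i j \<circ> \<pi>) k"
  let ?t = "transpose i j"
  let ?O = "orb (?t \<circ> \<pi>) k"
  have tp: "(?t \<circ> \<pi>) permutes {..<n}" using permutes_compose[OF pp permutes_swap_id[of i "{..<n}" j]] i j by simp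
  have tij: "(?t \<circ> \<pi>) i = j" using pi by simp
  have tcl: "?t y \<in> ?O" if y: "y \<in> ?O" for y
  proof -
    consider "y = i" | "y = j" | "y \<noteq> i \<and> y \<noteq> j" by blast
    then show ?thesis
    proof cases
      case 1
      have "(?t \<circ> \<pi>) y \<in> ?O" using orb_step[OF y] .
      then show ?thesis using 1 tij by simp
    next
      case 2
      have "j \<in> orb (?t \<circ> \<pi>) i" using orb_step[OF orb_self, of "?t \<circ> \<pi>" i] tij by simp
      then have "orb (?t \<circ> \<pi>) j = orb (?t \<circ> \<pi>) i" by (rule orb_same[OF tp])
      moreover have "orb (?t \<circ> \<pi>) j = ?O" using orb_same[OF tp] y 2 by simp
      ultimately have "i \<in> ?O" using orb_self by metis
      then show ?thesis using 2 by simp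
    next
      case 3 then show ?thesis using y by simp
    qed
  qed
  show "?t x \<in> ?O \<and> \<pi> x \<in> ?O"
  proof
    show "?t x \<in> ?O" using tcl[OF x] .
    have "(?t \<circ> \<pi>) x \<in> ?O" using orb_step[OF x] .
    then have "?t ((?t \<circ> \<pi>) x) \<in> ?O" by (rule tcl)
    then show "\<pi> x \<in> ?O" by simp
  qed
qed

lemma cycle_decomp_transp:
  assumes ij: "i \<noteq> j" and i: "i < n" and j: "j < n" and cs: "is_cycle_decomp n (transpose i j) cs"
  shows "\<exists>x y. transp_list cs = [(x, y)] \<and> {x, y} = {i, j} \<and> x \<noteq> y"
proof -
  have moved: "{k. k < n \<and> transpose i j k \<noteq> k} = {i, j}" using ij i j by (auto simp: transpose_def)
  have U: "(\<Union>c\<in>set cs. set c) = {i, j}" using cs moved unfolding is_cycle_decomp_def by simp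
  have each: "set c = {i, j} \<and> length c = 2" if c: "c \<in> set cs" for c
  proof -
    have d: "distinct c" and l: "2 \<le> length c" using cs c unfolding is_cycle_decomp_def by auto
    have sub: "set c \<subseteq> {i, j}" using U c by blast
    have "length c = card (set c)" using distinct_card[OF d] by simp
    also have "\<dots> \<le> card {i, j}" using sub by (intro card_mono) auto
    also have "\<dots> = 2" using ij by simp
    finally have "length c = 2" using l by simp
    moreover have "card (set c) = 2" using calculation distinct_card[OF d] by simp
    ultimately show ?thesis using sub ij
      by (metis card_subset_eq finite.emptyI finite.insertI \<open>card {i, j} = 2\<close>)
  qed
  have ne: "cs \<noteq> []" using U by auto
  then obtain c cs' where ccs: "cs = c # cs'" by (cases cs) auto
  have "cs' = []"
  proof (rule ccontr)
    assume "cs' \<noteq> []"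
    then obtain c2 cs'' where c2: "cs' = c2 # cs''" by (cases cs') auto
    have "c \<noteq> c2" using cs ccs c2 unfolding is_cycle_decomp_def by auto
    then have "set c \<inter> set c2 = {}" using cs ccs c2 unfolding is_cycle_decomp_def by auto
    moreover have "set c = {i, j}" "set c2 = {i, j}" using each ccs c2 by auto
    ultimately show False by simp
  qed
  then have cs1: "cs = [c]" using ccs by simp
  have c2: "set c = {i, j}" "length c = 2" "distinct c" using each cs1 cs unfolding is_cycle_decomp_def by auto
  then obtain x y where xy: "c = [x, y]"
    by (metis (no_types, lifting) One_nat_def Suc_1 length_0_conv length_Suc_conv)
  have "transp_list cs = [(x, y)]" using cs1 xy unfolding transp_list_def by simp
  moreover have "{x, y} = {i, j}" using c2 xy by simp
  moreover have "x \<noteq> y" using c2 xy by simp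
  ultimately show ?thesis by blast
qed

lemma (in FR) Fcomp_transp:
  assumes pp: "\<pi> permutes {..<n}" and pi: "\<pi> i = i" and ij: "i \<noteq> j" and i: "i < n" and j: "j < n"
  shows "\<forall>cs. is_cycle_decomp n (transpose i j) cs \<longrightarrow> Fcomp R n (transp_list cs) \<pi> = tunit R"
proof (intro allI impI)
  fix cs assume cs: "is_cycle_decomp n (transpose i j) cs"
  obtain x y where xy: "transp_list cs = [(x, y)]" "{x, y} = {i, j}" "x \<noteq> y"
    using cycle_decomp_transp[OF ij i j cs] by blast
  have "gd \<pi> [(x, y)]"
  proof -
    have "x = i \<or> y = i" using xy(2) by blast
    then have "\<pi> x = x \<or> \<pi> y = y" using pi by blast
    then show ?thesis using xy(3) by (simp add: prod_transp_def)
  qed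
  then show "Fcomp R n (transp_list cs) \<pi> = tunit R"
    unfolding xy(1) by (rule Fcomp_gd[OF permutes_inj[OF pp]])
qed

lemma sup_facts:
  assumes p: "\<rho> permutes {..<n}"
  shows "set (support \<rho> k) = orb \<rho> k" "support \<rho> k ! 0 = k" "distinct (support \<rho> k)"
    "\<rho> k \<noteq> k \<Longrightarrow> 2 \<le> length (support \<rho> k)"
    "\<forall>j<length (support \<rho> k). \<rho> (support \<rho> k ! j) = support \<rho> k ! ((j + 1) mod length (support \<rho> k))"
proof -
  have pm: "permutation \<rho>" by (rule perm_of[OF p])
  show "set (support \<rho> k) = orb \<rho> k" unfolding support_set[OF pm] orb_def by auto
  have lp: "least_power \<rho> k > 0" "(\<rho> ^^ least_power \<rho> k) k = k" using least_power_of_permutation[OF pm] by auto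
  show "support \<rho> k ! 0 = k" using lp by simp
  show "distinct (support \<rho> k)" by (rule cycle_of_permutation[OF pm])
  show "\<rho> k \<noteq> k \<Longrightarrow> 2 \<le> length (support \<rho> k)"
  proof -
    assume "\<rho> k \<noteq> k"
    then have "Suc 0 < least_power \<rho> k" by (rule least_power_gt_one[OF pm])
    then show ?thesis by simp
  qed
  show "\<forall>j<length (support \<rho> k). \<rho> (support \<rho> k ! j) = support \<rho> k ! ((j + 1) mod length (support \<rho> k))"
  proof (intro allI impI)
    fix j assume j: "j < length (support \<rho> k)"
    let ?l = "least_power \<rho> k"
    have jl: "j < ?l" using j by simp
    show "\<rho> (support \<rho> k ! j) = support \<rho> k ! ((j + 1) mod length (support \<rho> k))"
    proof (cases "j + 1 < ?l")
      case True
      then show ?thesis using jl by simp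
    next
      case False
      then have "j + 1 = ?l" using jl by simp
      then have "\<rho> ((\<rho> ^^ j) k) = k" using lp(2) by (metis Suc_eq_plus1 comp_apply funpow.simps(2))
      then show ?thesis using jl lp \<open>j + 1 = ?l\<close> by simp
    qed
  qed
qed

lemma cycle_decomp_ex:
  assumes p: "\<rho> permutes {..<n}"
  shows "\<exists>cs. is_cycle_decomp n \<rho> cs"
proof -
  define reps where "reps = filter (\<lambda>k. \<rho> k \<noteq> k \<and> k = Min (orb \<rho> k)) [0..<n]"
  define cs where "cs = map (support \<rho>) reps"
  have dr: "distinct reps" unfolding reps_def by simp
  have repsI: "k \<in> set reps \<longleftrightarrow> k < n \<and> \<rho> k \<noteq> k \<and> k = Min (orb \<rho> k)" for k
    unfolding reps_def by auto
  have injs: "inj_on (support \<rho>) (set reps)"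
  proof (rule inj_onI)
    fix a b assume eq: "support \<rho> a = support \<rho> b"
    have "a = support \<rho> a ! 0" by (rule sup_facts(2)[OF p, symmetric])
    also have "\<dots> = support \<rho> b ! 0" by (simp only: eq)
    also have "\<dots> = b" by (rule sup_facts(2)[OF p])
    finally show "a = b" .
  qed
  have "distinct cs" unfolding cs_def using dr injs by (simp add: distinct_map)
  moreover have "\<forall>c\<in>set cs. 2 \<le> length c \<and> distinct c \<and>
        (\<forall>j<length c. \<rho> (c ! j) = c ! ((j + 1) mod length c))"
  proof
    fix c assume "c \<in> set cs"
    then obtain k where k: "k \<in> set reps" "c = support \<rho> k" unfolding cs_def by auto
    have mv: "\<rho> k \<noteq> k" using k(1) repsI by blast
    have A: "2 \<le> length (support \<rho> k)" by (rule sup_facts(4)[OF p mv])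
    have B: "distinct (support \<rho> k)" by (rule sup_facts(3)[OF p])
    have C: "\<forall>j<length (support \<rho> k). \<rho> (support \<rho> k ! j) = support \<rho> k ! ((j + 1) mod length (support \<rho> k))"
      by (rule sup_facts(5)[OF p])
    show "2 \<le> length c \<and> distinct c \<and> (\<forall>j<length c. \<rho> (c ! j) = c ! ((j + 1) mod length c))"
      unfolding k(2) by (rule conjI, fact A, rule conjI, fact B, fact C)
  qed
  moreover have "\<forall>c1\<in>set cs. \<forall>c2\<in>set cs. c1 \<noteq> c2 \<longrightarrow> set c1 \<inter> set c2 = {}"
  proof (intro ballI impI)
    fix c1 c2 assume c1: "c1 \<in> set cs" and c2: "c2 \<in> set cs" and ne: "c1 \<noteq> c2"
    obtain a where a: "a \<in> set reps" "c1 = support \<rho> a" using c1 unfolding cs_def by auto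
    obtain b where b: "b \<in> set reps" "c2 = support \<rho> b" using c2 unfolding cs_def by auto
    show "set c1 \<inter> set c2 = {}"
    proof (rule ccontr)
      assume "set c1 \<inter> set c2 \<noteq> {}"
      then obtain z where "z \<in> set c1" "z \<in> set c2" by blast
      then have z: "z \<in> orb \<rho> a" "z \<in> orb \<rho> b" using a(2) b(2) sup_facts(1)[OF p] by simp_all
      have "orb \<rho> a = orb \<rho> b" using orb_same[OF p z(1)] orb_same[OF p z(2)] by simp
      moreover have "a = Min (orb \<rho> a)" "b = Min (orb \<rho> b)" using a(1) b(1) repsI by blast+
      ultimately have "a = b" by simp
      then show False using a b ne by simp
    qed
  qed
  moreover have "(\<Union>c\<in>set cs. set c) = {k. k < n \<and> \<rho> k \<noteq> k}"
  proof (intro set_eqI iffI)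
    fix x assume "x \<in> (\<Union>c\<in>set cs. set c)"
    then obtain c where c: "c \<in> set cs" "x \<in> set c" by blast
    then obtain k where k0: "k \<in> set reps" "c = support \<rho> k" unfolding cs_def by auto
    have k: "k \<in> set reps" "x \<in> orb \<rho> k" using k0 c(2) sup_facts(1)[OF p, of k] by simp_all
    have kn: "k < n" "\<rho> k \<noteq> k" using k(1) repsI by auto
    have "x < n" using orb_bound[OF p kn(1)] k(2) by auto
    moreover have "\<rho> x \<noteq> x"
    proof
      assume "\<rho> x = x"
      then have "k = x" using orb_fixpt[OF p _ k(2)] by simp
      then show False using kn \<open>\<rho> x = x\<close> by simp
    qed
    ultimately show "x \<in> {k. k < n \<and> \<rho> k \<noteq> k}" by simp
  next
    fix x assume "x \<in> {k. k < n \<and> \<rho> k \<noteq> k}"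
    then have x: "x < n" "\<rho> x \<noteq> x" by auto
    define m where "m = Min (orb \<rho> x)"
    have fin: "finite (orb \<rho> x)" using orb_finite[OF p x(1)] .
    have mo: "m \<in> orb \<rho> x" unfolding m_def using Min_in[OF fin] orb_self by blast
    have om: "orb \<rho> m = orb \<rho> x" by (rule orb_same[OF p mo])
    have mn: "m < n" using orb_bound[OF p x(1)] mo by auto
    have mm: "\<rho> m \<noteq> m"
    proof
      assume "\<rho> m = m"
      then have "x = m" using orb_fixpt[OF p _ mo] by simp
      then show False using x \<open>\<rho> m = m\<close> by simp
    qed
    have "m = Min (orb \<rho> m)" using om m_def by simp
    then have mr: "m \<in> set reps" using repsI mn mm by blast
    have xs: "x \<in> set (support \<rho> m)" using sup_facts(1)[OF p, of m] om orb_self[of x \<rho>] by simp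
    have "support \<rho> m \<in> set cs" unfolding cs_def using mr by simp
    then show "x \<in> (\<Union>c\<in>set cs. set c)" using xs by blast
  qed
  ultimately have "is_cycle_decomp n \<rho> cs" unfolding is_cycle_decomp_def by (intro conjI)
  then show ?thesis by blast
qed

lemma disj_comm:
  assumes pr: "\<rho> permutes {..<n}" and ps: "\<sigma> permutes {..<n}" and dj: "\<forall>k. \<rho> k = k \<or> \<sigma> k = k"
  shows "\<sigma> \<circ> \<rho> = \<rho> \<circ> \<sigma>"
proof (rule ext)
  fix k
  have ir: "inj \<rho>" using permutes_inj[OF pr] .
  have iss: "inj \<sigma>" using permutes_inj[OF ps] .
  show "(\<sigma> \<circ> \<rho>) k = (\<rho> \<circ> \<sigma>) k"
  proof (cases "\<rho> k = k")
    case True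
    have "\<rho> (\<sigma> k) = \<sigma> k"
    proof (rule ccontr)
      assume a: "\<rho> (\<sigma> k) \<noteq> \<sigma> k"
      then have "\<sigma> (\<sigma> k) = \<sigma> k" using dj by blast
      then have "\<sigma> k = k" using iss by (simp add: inj_eq)
      then show False using a True by simp
    qed
    then show ?thesis using True by simp
  next
    case False
    then have sk: "\<sigma> k = k" using dj by blast
    have "\<sigma> (\<rho> k) = \<rho> k"
    proof (rule ccontr)
      assume a: "\<sigma> (\<rho> k) \<noteq> \<rho> k"
      then have "\<rho> (\<rho> k) = \<rho> k" using dj by blast
      then have "\<rho> k = k" using ir by (simp add: inj_eq)
      then show False using False by simp
    qed
    then show ?thesis using sk by simp
  qed
qed

context FR begin

lemma part1:
  assumes pr: "\<rho> permutes {..<n}" and ps: "\<sigma> permutes {..<n}" and dj: "\<forall>k. \<rho> k = k \<or> \<sigma> k = k"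
  shows "{z. fus_rel R n (bare R \<rho>) (bare R \<sigma>) z} = {bare R (\<rho> \<circ> \<sigma>)} \<and>
         {z. fus_rel R n (bare R \<sigma>) (bare R \<rho>) z} = {bare R (\<rho> \<circ> \<sigma>)}"
proof
  have H1: "\<forall>cs. is_cycle_decomp n \<rho> cs \<longrightarrow> Fcomp R n (transp_list cs) \<sigma> = tunit R"
    using Fcomp_disjoint[OF ps dj] by blast
  show "{z. fus_rel R n (bare R \<rho>) (bare R \<sigma>) z} = {bare R (\<rho> \<circ> \<sigma>)}"
    by (rule main_fus[OF pr ps H1 H2_disj[OF pr ps dj] cycle_decomp_ex[OF pr]])
  have dj': "\<forall>k. \<sigma> k = k \<or> \<rho> k = k" using dj by blast
  have H1': "\<forall>cs. is_cycle_decomp n \<sigma> cs \<longrightarrow> Fcomp R n (transp_list cs) \<rho> = tunit R"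
    using Fcomp_disjoint[OF pr dj'] by blast
  have "{z. fus_rel R n (bare R \<sigma>) (bare R \<rho>) z} = {bare R (\<sigma> \<circ> \<rho>)}"
    by (rule main_fus[OF ps pr H1' H2_disj[OF ps pr dj'] cycle_decomp_ex[OF ps]])
  then show "{z. fus_rel R n (bare R \<sigma>) (bare R \<rho>) z} = {bare R (\<rho> \<circ> \<sigma>)}"
    using disj_comm[OF pr ps dj] by simp
qed

lemma part2:
  "\<sigma> permutes {..<n} \<Longrightarrow> \<exists>\<tau>s. (\<forall>\<tau>\<in>set \<tau>s. is_transposition n \<tau>) \<and> \<sigma> = foldr (\<circ>) \<tau>s id \<and>
      nested_outs R n \<tau>s = {bare R \<sigma>}"
proof (induction "card {k. \<sigma> k \<noteq> k}" arbitrary: \<sigma> rule: less_induct)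
  case less
  have ps: "\<sigma> permutes {..<n}" by (rule less.prems)
  show ?case
  proof (cases "\<sigma> = id")
    case True
    show ?thesis by (rule exI[of _ "[]"]) (simp add: True)
  next
    case False
    then obtain i where si: "\<sigma> i \<noteq> i" by (auto simp: fun_eq_iff)
    have i: "i < n" using permutes_not_in[OF ps, of i] si by (meson lessThan_iff)
    define j where "j = \<sigma> i"
    have j: "j < n" unfolding j_def using permutes_in_image[OF ps, of i] i by simp
    have ij: "i \<noteq> j" using si unfolding j_def by simp
    define t where "t = transpose i j"
    define \<sigma>' where "\<sigma>' = t \<circ> \<sigma>"
    have tp: "t permutes {..<n}" unfolding t_def using permutes_swap_id[of i "{..<n}" j] i j by simp
    have ps': "\<sigma>' permutes {..<n}" unfolding \<sigma>'_def by (rule permutes_compose[OF ps tp])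
    have s'i: "\<sigma>' i = i" unfolding \<sigma>'_def t_def j_def by simp
    have sub: "{k. \<sigma>' k \<noteq> k} \<subseteq> {k. \<sigma> k \<noteq> k}"
    proof
      fix k assume k: "k \<in> {k. \<sigma>' k \<noteq> k}"
      show "k \<in> {k. \<sigma> k \<noteq> k}"
      proof (rule ccontr)
        assume "k \<notin> {k. \<sigma> k \<noteq> k}"
        then have sk: "\<sigma> k = k" by simp
        have "k \<noteq> i" using sk si by auto
        moreover have "k \<noteq> j"
        proof
          assume "k = j"
          then have "\<sigma> j = \<sigma> i" using sk unfolding j_def by simp
          then have "j = i" using permutes_inj[OF ps] by (simp add: inj_eq)
          then show False using ij by simp
        qed
        ultimately have "\<sigma>' k = k" unfolding \<sigma>'_def t_def using sk by simp
        then show False using k by simp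
      qed
    qed
    have fin: "finite {k. \<sigma> k \<noteq> k}"
    proof (rule finite_subset)
      show "{k. \<sigma> k \<noteq> k} \<subseteq> {..<n}" using permutes_not_in[OF ps] by (meson mem_Collect_eq subsetI lessThan_iff)
    qed simp
    have "{k. \<sigma>' k \<noteq> k} \<subset> {k. \<sigma> k \<noteq> k}" using sub s'i si by blast
    then have lt: "card {k. \<sigma>' k \<noteq> k} < card {k. \<sigma> k \<noteq> k}" using psubset_card_mono[OF fin] by blast
    obtain \<tau>s' where IH: "\<forall>\<tau>\<in>set \<tau>s'. is_transposition n \<tau>" "\<sigma>' = foldr (\<circ>) \<tau>s' id"
      "nested_outs R n \<tau>s' = {bare R \<sigma>'}" using less.hyps[OF lt ps'] by blast
    have tt: "t \<circ> \<sigma>' = \<sigma>" unfolding \<sigma>'_def t_def by (simp add: fun_eq_iff)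
    have istr: "is_transposition n t" unfolding is_transposition_def t_def using i j ij by blast
    have "nested_outs R n (t # \<tau>s') = {bare R \<sigma>}"
    proof (cases \<tau>s')
      case Nil
      then have "\<sigma>' = id" using IH(2) by simp
      then have "t = \<sigma>" using tt by simp
      then show ?thesis using Nil by simp
    next
      case (Cons t' ts)
      have "nested_outs R n (t # \<tau>s') = {z. fus_rel R n (bare R t) (bare R \<sigma>') z}"
        using IH(3) Cons by simp
      also have "\<dots> = {bare R (t \<circ> \<sigma>')}"
        unfolding t_def
      proof (rule main_fus)
        show "transpose i j permutes {..<n}" using tp unfolding t_def .
        show "\<sigma>' permutes {..<n}" by (rule ps')
        show "\<forall>cs. is_cycle_decomp n (transpose i j) cs \<longrightarrow> Fcomp R n (transp_list cs) \<sigma>' = tunit R"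
          by (rule Fcomp_transp[OF ps' s'i ij i j])
        show "\<forall>k<n. \<forall>x\<in>orb (transpose i j \<circ> \<sigma>') k. transpose i j x \<in> orb (transpose i j \<circ> \<sigma>') k \<and> \<sigma>' x \<in> orb (transpose i j \<circ> \<sigma>') k"
          by (rule H2_transp[OF ps' s'i ij i j])
        show "\<exists>cs. is_cycle_decomp n (transpose i j) cs" using cycle_decomp_ex tp unfolding t_def by blast
      qed
      finally show ?thesis using tt by simp
    qed
    moreover have "\<forall>\<tau>\<in>set (t # \<tau>s'). is_transposition n \<tau>" using IH(1) istr by simp
    moreover have "\<sigma> = foldr (\<circ>) (t # \<tau>s') id" using IH(2) tt by simp
    ultimately show ?thesis by blast
  qed
qed

end

theorem proposition4p17:
  fixes R :: "'a fusion_ring" and n :: nat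
  assumes "fusion_data R" and "2 \<le> n"
  shows "(\<forall>\<rho> \<sigma>. \<rho> permutes {..<n} \<and> \<sigma> permutes {..<n} \<and> (\<forall>k. \<rho> k = k \<or> \<sigma> k = k) \<longrightarrow>
            {z. fus_rel R n (bare R \<rho>) (bare R \<sigma>) z} = {bare R (\<rho> \<circ> \<sigma>)} \<and>
            {z. fus_rel R n (bare R \<sigma>) (bare R \<rho>) z} = {bare R (\<rho> \<circ> \<sigma>)})
       \<and> (\<forall>\<sigma>. \<sigma> permutes {..<n} \<longrightarrow>
            (\<exists>\<tau>s. (\<forall>\<tau>\<in>set \<tau>s. is_transposition n \<tau>) \<and> \<sigma> = foldr (\<circ>) \<tau>s id \<and>
                  nested_outs R n \<tau>s = {bare R \<sigma>}))"
proof -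
  interpret FR R by (rule FR.intro[OF assms(1)])
  show ?thesis using part1 part2 by blast
qed

end
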